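(* Let $k\subset K$ be differential fields of characteristic zero with the same algebraically closed field of constants $C$, and assume there exists $x\in k$ with $x'=1$. Let $f\in K$ be an iterated integral over $k$. Then: (1) $k\langle f\rangle$ is a Picard–Vessiot extension of $k$ with unipotent differential Galois group; (2) if $f\notin k$, then there exist elements $y_1,\dots,y_{r-1},y_r=f$ of $k\langle f\rangle$, algebraically independent over $k$, such that $k\langle f\rangle=k(y_1,\dots,y_r)$; in particular $k(f)$ is relatively algebraically closed in $k\langle f\rangle$.
   Context: An element $f\in K$ is an iterated integral over $k$ if $f^{(n)}\in k$ for some $n\in\mathbb{N}$. $k\langle f\rangle$ denotes the differential subfield of $K$ generated by $f$ over $k$, i.e. $k(f,f',f'',\dots)$. *)

theory Defs
  imports Main "HOL-Computational_Algebra.Polynomial"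
begin

text \<open>The ambient differential field K is the type 'a (a field of characteristic zero)
  with derivation D; subfields are represented as subsets of 'a.\<close>

definition is_derivation :: "('a::field \<Rightarrow> 'a) \<Rightarrow> bool" where
  "is_derivation D \<longleftrightarrow> (\<forall>x y. D (x + y) = D x + D y) \<and> (\<forall>x y. D (x * y) = D x * y + x * D y)"

definition is_subfield :: "'a::field set \<Rightarrow> bool" where
  "is_subfield F \<longleftrightarrow> 0 \<in> F \<and> 1 \<in> F \<and> (\<forall>x\<in>F. \<forall>y\<in>F. x + y \<in> F \<and> x * y \<in> F)
     \<and> (\<forall>x\<in>F. - x \<in> F) \<and> (\<forall>x\<in>F. inverse x \<in> F)"

definition is_diff_subfield :: "('a::field \<Rightarrow> 'a) \<Rightarrow> 'a set \<Rightarrow> bool" where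
  "is_diff_subfield D F \<longleftrightarrow> is_subfield F \<and> (\<forall>x\<in>F. D x \<in> F)"

definition field_gen :: "'a::field set \<Rightarrow> 'a set" where
  "field_gen S = \<Inter>{F. is_subfield F \<and> S \<subseteq> F}"

definition diff_field_gen :: "('a::field \<Rightarrow> 'a) \<Rightarrow> 'a set \<Rightarrow> 'a set" where
  "diff_field_gen D S = \<Inter>{F. is_diff_subfield D F \<and> S \<subseteq> F}"

definition diff_adjoin :: "('a::field \<Rightarrow> 'a) \<Rightarrow> 'a set \<Rightarrow> 'a \<Rightarrow> 'a set" where
  "diff_adjoin D k f = diff_field_gen D (k \<union> {f})"

definition constants_of :: "('a::field \<Rightarrow> 'a) \<Rightarrow> 'a set \<Rightarrow> 'a set" where
  "constants_of D F = {c \<in> F. D c = 0}"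

definition alg_closed_subfield :: "'a::field set \<Rightarrow> bool" where
  "alg_closed_subfield C \<longleftrightarrow>
     (\<forall>p::'a poly. (\<forall>i. coeff p i \<in> C) \<and> degree p > 0 \<longrightarrow> (\<exists>c\<in>C. poly p c = 0))"

definition iterated_integral :: "('a::field \<Rightarrow> 'a) \<Rightarrow> 'a set \<Rightarrow> 'a \<Rightarrow> bool" where
  "iterated_integral D k f \<longleftrightarrow> (\<exists>n. (D ^^ n) f \<in> k)"

definition pv_data :: "('a::field \<Rightarrow> 'a) \<Rightarrow> 'a set \<Rightarrow> 'a set \<Rightarrow> nat \<Rightarrow> (nat \<Rightarrow> 'a) \<Rightarrow> (nat \<Rightarrow> 'a) \<Rightarrow> bool" where
  "pv_data D k L n a y \<longleftrightarrow>
     (\<forall>j<n. a j \<in> k) \<and>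
     (\<forall>i<n. y i \<in> L \<and> (D ^^ n) (y i) + (\<Sum>j<n. a j * (D ^^ j) (y i)) = 0) \<and>
     (\<forall>c. (\<forall>i<n. D (c i) = 0) \<and> (\<Sum>i<n. c i * y i) = 0 \<longrightarrow> (\<forall>i<n. c i = 0)) \<and>
     L = diff_field_gen D (k \<union> y ` {..<n})"

definition picard_vessiot :: "('a::field \<Rightarrow> 'a) \<Rightarrow> 'a set \<Rightarrow> 'a set \<Rightarrow> bool" where
  "picard_vessiot D k L \<longleftrightarrow> is_diff_subfield D k \<and> is_diff_subfield D L \<and> k \<subseteq> L \<and>
     constants_of D L = constants_of D k \<and> (\<exists>n a y. pv_data D k L n a y)"

definition diff_aut :: "('a::field \<Rightarrow> 'a) \<Rightarrow> 'a set \<Rightarrow> 'a set \<Rightarrow> ('a \<Rightarrow> 'a) \<Rightarrow> bool" where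
  "diff_aut D k L \<sigma> \<longleftrightarrow> bij_betw \<sigma> L L \<and>
     (\<forall>x\<in>L. \<forall>y\<in>L. \<sigma> (x + y) = \<sigma> x + \<sigma> y \<and> \<sigma> (x * y) = \<sigma> x * \<sigma> y) \<and>
     (\<forall>x\<in>L. \<sigma> (D x) = D (\<sigma> x)) \<and> (\<forall>c\<in>k. \<sigma> c = c)"

text \<open>The differential Galois group, viewed as a linear algebraic group acting on the
  solution space V = C-span of a fundamental set, is unipotent: every element acts as a
  unipotent operator on V. This is required for every fundamental set generating L
  (unipotence does not depend on the faithful representation).\<close>
definition unipotent_galois :: "('a::field \<Rightarrow> 'a) \<Rightarrow> 'a set \<Rightarrow> 'a set \<Rightarrow> bool" where
  "unipotent_galois D k L \<longleftrightarrow>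
     (\<forall>n a y \<sigma>. pv_data D k L n a y \<and> diff_aut D k L \<sigma> \<longrightarrow>
        (\<exists>m. \<forall>c. (\<forall>i<n. D (c i) = 0) \<longrightarrow>
             ((\<lambda>z. \<sigma> z - z) ^^ m) (\<Sum>i<n. c i * y i) = 0))"

definition algebraic_over :: "'a::field set \<Rightarrow> 'a \<Rightarrow> bool" where
  "algebraic_over F z \<longleftrightarrow> (\<exists>p::'a poly. p \<noteq> 0 \<and> (\<forall>i. coeff p i \<in> F) \<and> poly p z = 0)"

definition alg_indep :: "'a::field set \<Rightarrow> nat \<Rightarrow> (nat \<Rightarrow> 'a) \<Rightarrow> bool" where
  "alg_indep k r y \<longleftrightarrow>
     (\<forall>E c. finite E \<and> (\<forall>e\<in>E. \<forall>i\<ge>r. e i = 0) \<and> (\<forall>e\<in>E. c e \<in> k) \<and>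
        (\<Sum>e\<in>E. c e * (\<Prod>i<r. y i ^ e i)) = 0 \<longrightarrow> (\<forall>e\<in>E. c e = 0))"

definition rel_alg_closed_in :: "'a::field set \<Rightarrow> 'a set \<Rightarrow> bool" where
  "rel_alg_closed_in F L \<longleftrightarrow> (\<forall>z\<in>L. algebraic_over F z \<longrightarrow> z \<in> F)"

end

theory Submission
  imports Defs
begin

locale deriv =
  fixes D :: "'a::field_char_0 \<Rightarrow> 'a"
  assumes der: "is_derivation D"
begin

lemma D_add: "D (x + y) = D x + D y"
  using der unfolding is_derivation_def by blast

lemma D_mult: "D (x * y) = D x * y + x * D y"
  using der unfolding is_derivation_def by blast

lemma D_0[simp]: "D 0 = 0"
  using D_add[of 0 0] by simp

lemma D_1[simp]: "D 1 = 0"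
  using D_mult[of 1 1] by simp

lemma D_uminus: "D (- x) = - D x"
proof -
  have "D x + D (- x) = 0" using D_add[of x "- x"] by simp
  then show ?thesis by (metis minus_unique)
qed

lemma D_diff: "D (x - y) = D x - D y"
  using D_add[of x "- y"] D_uminus[of y] by simp

lemma D_sum: "D (\<Sum>i\<in>S. f i) = (\<Sum>i\<in>S. D (f i))"
  by (induction S rule: infinite_finite_induct) (auto simp: D_add)

lemma D_of_nat[simp]: "D (of_nat n) = 0"
  by (induction n) (auto simp: D_add)

lemma D_power: "D (x ^ Suc n) = of_nat (Suc n) * x ^ n * D x"
proof (induction n)
  case 0 then show ?case by simp
next
  case (Suc n)
  have "D (x ^ Suc (Suc n)) = D (x * x ^ Suc n)" by simp
  also have "\<dots> = D x * x ^ Suc n + x * D (x ^ Suc n)" by (rule D_mult)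
  also have "\<dots> = D x * x ^ Suc n + x * (of_nat (Suc n) * x ^ n * D x)"
    by (simp only: Suc)
  also have "\<dots> = of_nat (Suc (Suc n)) * x ^ Suc n * D x"
    by (simp add: algebra_simps)
  finally show ?case .
qed

lemma D_power': "D (x ^ n) = of_nat n * x ^ (n - 1) * D x"
proof (cases n)
  case (Suc m)
  then show ?thesis using D_power[of x m] by (simp del: power_Suc)
qed simp

lemma D_cmult: "D c = 0 \<Longrightarrow> D (c * x) = c * D x"
  by (simp add: D_mult)

lemma D_inverse: "D (inverse x) = - D x * inverse x ^ 2"
proof (cases "x = 0")
  case True then show ?thesis by simp
next
  case False
  have "0 = D (x * inverse x)" using False by simp
  also have "\<dots> = D x * inverse x + x * D (inverse x)" by (rule D_mult)
  finally have "x * D (inverse x) = - D x * inverse x" by (metis add.commute minus_unique mult_minus_left)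
  then have "D (inverse x) = inverse x * (- D x * inverse x)"
    using False by (metis (no_types) mult.assoc mult.left_neutral left_inverse)
  then show ?thesis by (simp add: power2_eq_square algebra_simps)
qed

lemma D_divide: "D (x / y) = (D x * y - x * D y) / y ^ 2"
proof (cases "y = 0")
  case True then show ?thesis by simp
next
  case False
  have "D (x / y) = D (x * inverse y)" by (simp add: divide_inverse)
  also have "\<dots> = D x * inverse y + x * (- D y * inverse y ^ 2)" by (simp add: D_mult D_inverse)
  also have "\<dots> = (D x * y - x * D y) / y ^ 2" using False
    by (simp add: field_simps power2_eq_square)
  finally show ?thesis .
qed

lemma D_prod: "D (\<Prod>i\<in>S. f i) = (\<Sum>i\<in>S. D (f i) * (\<Prod>j\<in>S-{i}. f j))"
proof (induction S rule: infinite_finite_induct)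
  case (insert a S)
  have "D (\<Prod>i\<in>insert a S. f i) = D (f a) * (\<Prod>i\<in>S. f i) + f a * D (\<Prod>i\<in>S. f i)"
    using insert by (simp add: D_mult)
  also have "\<dots> = (\<Sum>i\<in>insert a S. D (f i) * (\<Prod>j\<in>insert a S-{i}. f j))"
  proof -
    have "(\<Sum>i\<in>S. D (f i) * (\<Prod>j\<in>insert a S-{i}. f j)) = f a * (\<Sum>i\<in>S. D (f i) * (\<Prod>j\<in>S-{i}. f j))"
      unfolding sum_distrib_left
    proof (rule sum.cong[OF refl])
      fix i assume "i \<in> S"
      then have "insert a S - {i} = insert a (S - {i})" using insert by auto
      then show "D (f i) * prod f (insert a S - {i}) = f a * (D (f i) * prod f (S - {i}))"
        using insert by simp
    qed
    moreover have "insert a S - {a} = S" using insert by auto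
    ultimately show ?thesis using insert by (simp add: algebra_simps)
  qed
  finally show ?case .
qed auto

lemma funpow_D_add: "(D ^^ n) (x + y) = (D ^^ n) x + (D ^^ n) y"
  by (induction n) (auto simp: D_add)

lemma funpow_D_diff: "(D ^^ n) (x - y) = (D ^^ n) x - (D ^^ n) y"
  by (induction n) (auto simp: D_diff)

lemma funpow_D_0[simp]: "(D ^^ n) 0 = 0"
  by (induction n) auto

lemma funpow_D_cmult: "D c = 0 \<Longrightarrow> (D ^^ n) (c * x) = c * (D ^^ n) x"
  by (induction n) (auto simp: D_cmult)

lemma funpow_D_Suc': "(D ^^ Suc n) x = (D ^^ n) (D x)"
  by (simp add: funpow_Suc_right del: funpow.simps)

lemma funpow_D_add_n: "(D ^^ (m + n)) x = (D ^^ m) ((D ^^ n) x)"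
  by (simp add: funpow_add)

end

definition subring :: "'a::field set \<Rightarrow> bool" where
  "subring R \<longleftrightarrow> 0 \<in> R \<and> 1 \<in> R \<and> (\<forall>x\<in>R. \<forall>y\<in>R. x + y \<in> R \<and> x * y \<in> R) \<and> (\<forall>x\<in>R. - x \<in> R)"

lemma subfield_subring: "is_subfield F \<Longrightarrow> subring F"
  unfolding is_subfield_def subring_def by blast

context
  fixes R :: "'a::field set"
  assumes R: "subring R"
begin
lemma sr_0[simp, intro]: "0 \<in> R" using R unfolding subring_def by blast
lemma sr_1[simp, intro]: "1 \<in> R" using R unfolding subring_def by blast
lemma sr_add[intro]: "x \<in> R \<Longrightarrow> y \<in> R \<Longrightarrow> x + y \<in> R" using R unfolding subring_def by blast
lemma sr_mult[intro]: "x \<in> R \<Longrightarrow> y \<in> R \<Longrightarrow> x * y \<in> R" using R unfolding subring_def by blast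
lemma sr_uminus[intro]: "x \<in> R \<Longrightarrow> - x \<in> R" using R unfolding subring_def by blast
lemma sr_diff[intro]: "x \<in> R \<Longrightarrow> y \<in> R \<Longrightarrow> x - y \<in> R"
  using sr_add sr_uminus by (metis diff_conv_add_uminus)
lemma sr_power[intro]: "x \<in> R \<Longrightarrow> x ^ n \<in> R"
  by (induction n) auto
lemma sr_sum[intro]: "(\<And>i. i \<in> S \<Longrightarrow> f i \<in> R) \<Longrightarrow> (\<Sum>i\<in>S. f i) \<in> R"
  by (induction S rule: infinite_finite_induct) auto
lemma sr_prod[intro]: "(\<And>i. i \<in> S \<Longrightarrow> f i \<in> R) \<Longrightarrow> (\<Prod>i\<in>S. f i) \<in> R"
  by (induction S rule: infinite_finite_induct) auto
lemma sr_of_nat[intro]: "of_nat n \<in> R"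
  by (induction n) auto
end

context
  fixes F :: "'a::field set"
  assumes F: "is_subfield F"
begin
lemma sf_sr: "subring F" using subfield_subring F by blast
lemma sf_inverse[intro]: "x \<in> F \<Longrightarrow> inverse x \<in> F" using F unfolding is_subfield_def by blast
lemma sf_divide[intro]: "x \<in> F \<Longrightarrow> y \<in> F \<Longrightarrow> x / y \<in> F"
  using sf_inverse sr_mult[OF sf_sr] by (simp add: divide_inverse)
end

lemma field_gen_subfield: "is_subfield (field_gen S)"
  unfolding field_gen_def is_subfield_def by auto

lemma field_gen_sup: "S \<subseteq> field_gen S"
  unfolding field_gen_def by auto

lemma field_gen_least: "is_subfield F \<Longrightarrow> S \<subseteq> F \<Longrightarrow> field_gen S \<subseteq> F"
  unfolding field_gen_def by auto

lemma field_gen_mono: "S \<subseteq> T \<Longrightarrow> field_gen S \<subseteq> field_gen T"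
  by (meson field_gen_least field_gen_subfield field_gen_sup order_trans)

lemma field_gen_idem: "is_subfield F \<Longrightarrow> field_gen F = F"
  by (simp add: field_gen_least field_gen_sup subset_antisym)

lemma field_gen_field_gen_Un: "field_gen (field_gen S \<union> T) = field_gen (S \<union> T)"
proof
  show "field_gen (field_gen S \<union> T) \<subseteq> field_gen (S \<union> T)"
    by (intro field_gen_least field_gen_subfield)
      (metis Un_least field_gen_mono field_gen_sup le_sup_iff order_trans sup_ge1 sup_ge2)
  show "field_gen (S \<union> T) \<subseteq> field_gen (field_gen S \<union> T)"
    by (intro field_gen_mono) (use field_gen_sup in blast)
qed

lemma field_gen_eqI: "is_subfield F \<Longrightarrow> S \<subseteq> F \<Longrightarrow> F \<subseteq> field_gen S \<Longrightarrow> field_gen S = F"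
  using field_gen_least by blast

lemma field_gen_sub_iff: "field_gen S \<subseteq> field_gen T \<longleftrightarrow> S \<subseteq> field_gen T"
  by (meson field_gen_least field_gen_subfield field_gen_sup order_trans)

context deriv
begin

lemma diff_closure:
  assumes "\<forall>s\<in>S. D s \<in> field_gen S"
  shows "\<forall>z\<in>field_gen S. D z \<in> field_gen S"
proof -
  let ?G = "field_gen S"
  have G: "is_subfield ?G" by (rule field_gen_subfield)
  let ?H = "{z \<in> ?G. D z \<in> ?G}"
  have "is_subfield ?H"
    unfolding is_subfield_def
  proof (intro conjI ballI)
    show "0 \<in> ?H" "1 \<in> ?H" using sf_sr[OF G] by auto
  next
    fix x y assume "x \<in> ?H" "y \<in> ?H"
    then show "x + y \<in> ?H" "x * y \<in> ?H" using sf_sr[OF G] by (auto simp: D_add D_mult)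
  next
    fix x assume "x \<in> ?H"
    then show "- x \<in> ?H" "inverse x \<in> ?H" using sf_sr[OF G] sf_inverse[OF G]
      by (auto simp: D_uminus D_inverse)
  qed
  moreover have "S \<subseteq> ?H" using assms field_gen_sup by blast
  ultimately have "?G \<subseteq> ?H" by (rule field_gen_least)
  then show ?thesis by blast
qed

lemma diff_field_gen_eq:
  assumes "\<forall>s\<in>S. D s \<in> field_gen S"
  shows "diff_field_gen D S = field_gen S"
proof
  have "is_diff_subfield D (field_gen S)"
    unfolding is_diff_subfield_def using field_gen_subfield diff_closure[OF assms] by blast
  then show "diff_field_gen D S \<subseteq> field_gen S"
    unfolding diff_field_gen_def using field_gen_sup by blast
  show "field_gen S \<subseteq> diff_field_gen D S"
    unfolding diff_field_gen_def is_diff_subfield_def using field_gen_least by blast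
qed

end

definition pin :: "'a::zero set \<Rightarrow> 'a poly \<Rightarrow> bool" where
  "pin R P \<longleftrightarrow> (\<forall>i. coeff P i \<in> R)"

context
  fixes R :: "'a::field set"
  assumes R: "subring R"
begin

lemma pin_0[simp]: "pin R 0" using R by (simp add: pin_def)
lemma pin_const[simp]: "pin R [:c:] \<longleftrightarrow> c \<in> R"
  using R by (auto simp: pin_def coeff_pCons' split: if_splits)
lemma pin_pCons[simp]: "pin R (pCons a p) \<longleftrightarrow> a \<in> R \<and> pin R p"
  unfolding pin_def by (metis coeff_pCons_0 coeff_pCons_Suc not0_implies_Suc)
lemma pin_1[simp]: "pin R 1" using R by (simp add: one_pCons)
lemma pin_add[intro]: "pin R p \<Longrightarrow> pin R q \<Longrightarrow> pin R (p + q)"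
  using R by (auto simp: pin_def)
lemma pin_uminus[intro]: "pin R p \<Longrightarrow> pin R (- p)"
  using R by (auto simp: pin_def)
lemma pin_diff[intro]: "pin R p \<Longrightarrow> pin R q \<Longrightarrow> pin R (p - q)"
  using R by (auto simp: pin_def)
lemma pin_smult[intro]: "c \<in> R \<Longrightarrow> pin R p \<Longrightarrow> pin R (smult c p)"
  using R by (auto simp: pin_def)
lemma pin_monom[intro]: "c \<in> R \<Longrightarrow> pin R (monom c n)"
  using R by (auto simp: pin_def)
lemma pin_mult[intro]: "pin R p \<Longrightarrow> pin R q \<Longrightarrow> pin R (p * q)"
  using R by (auto simp: pin_def coeff_mult intro!: sr_sum sr_mult)
lemma pin_power[intro]: "pin R p \<Longrightarrow> pin R (p ^ n)"
  by (induction n) auto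
lemma pin_sum[intro]: "(\<And>i. i \<in> S \<Longrightarrow> pin R (f i)) \<Longrightarrow> pin R (\<Sum>i\<in>S. f i)"
  by (induction S rule: infinite_finite_induct) auto
lemma pin_pcompose[intro]: "pin R p \<Longrightarrow> pin R q \<Longrightarrow> pin R (pcompose p q)"
  by (induction p) (auto simp: pcompose_pCons)
lemma pin_pderiv[intro]: "pin R p \<Longrightarrow> pin R (pderiv p)"
  using R by (auto simp: pin_def coeff_pderiv)
lemma pin_poly[intro]: "pin R p \<Longrightarrow> x \<in> R \<Longrightarrow> poly p x \<in> R"
  using R by (auto simp: pin_def poly_altdef)
lemma pin_mono: "R \<subseteq> S \<Longrightarrow> pin R p \<Longrightarrow> pin S p"
  by (auto simp: pin_def)
end

lemma pin_lead: "pin R p \<Longrightarrow> lead_coeff p \<in> R"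
  by (simp add: pin_def)

definition trans_over :: "'a::field set \<Rightarrow> 'a \<Rightarrow> bool" where
  "trans_over G w \<longleftrightarrow> (\<forall>P. pin G P \<longrightarrow> poly P w = 0 \<longrightarrow> P = 0)"

lemma trans_overD: "trans_over G w \<Longrightarrow> pin G P \<Longrightarrow> poly P w = 0 \<Longrightarrow> P = 0"
  unfolding trans_over_def by blast

lemma trans_over_mono: "trans_over G w \<Longrightarrow> H \<subseteq> G \<Longrightarrow> trans_over H w"
  unfolding trans_over_def by (meson pin_def subsetD)

lemma trans_over_not_in:
  assumes "trans_over G w" "subring G" shows "w \<notin> G"
proof
  assume "w \<in> G"
  then have "pin G [:- w, 1:]" using assms(2) by auto
  moreover have "poly [:- w, 1:] w = 0" by simp
  ultimately show False using assms(1) trans_overD by fastforce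
qed

section \<open>The twisted derivative of polynomials\<close>

context deriv
begin

definition Dl :: "'a \<Rightarrow> 'a poly \<Rightarrow> 'a poly" where
  "Dl w P = map_poly D P + pderiv P * [:D w:]"

lemma coeff_Dl: "coeff (Dl w P) i = D (coeff P i) + of_nat (Suc i) * coeff P (Suc i) * D w"
  by (simp add: Dl_def coeff_map_poly coeff_pderiv)

lemma D_poly: "D (poly P w) = poly (Dl w P) w"
proof (induction P)
  case 0 then show ?case by (simp add: Dl_def)
next
  case (pCons a p)
  have m: "map_poly D (pCons a p) = pCons (D a) (map_poly D p)"
    by (simp add: map_poly_pCons)
  show ?case
    by (simp add: Dl_def D_add D_mult pCons m pderiv_pCons algebra_simps)
qed

lemma degree_Dl: "degree (Dl w P) \<le> degree P"
  by (rule degree_le) (auto simp: coeff_Dl coeff_eq_0)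

lemma coeff_Dl_top: "coeff (Dl w P) (degree P) = D (lead_coeff P)"
  by (simp add: coeff_Dl coeff_eq_0)

lemma pin_Dl:
  assumes R: "subring R" and "\<forall>x\<in>R. D x \<in> R" "D w \<in> R" "pin R P"
  shows "pin R (Dl w P)"
  using assms by (auto simp: pin_def coeff_Dl intro!: sr_add[OF R] sr_mult[OF R] sr_of_nat[OF R])

end

definition frac :: "'a::field set \<Rightarrow> 'a set" where
  "frac R = {p / q | p q. p \<in> R \<and> q \<in> R \<and> q \<noteq> 0}"

lemma frac_subfield:
  assumes R: "subring R" shows "is_subfield (frac R)"
  unfolding is_subfield_def
proof (intro conjI ballI)
  show "0 \<in> frac R" "1 \<in> frac R" unfolding frac_def using R
    by (intro CollectI exI[of _ 0] exI[of _ 1]; simp)+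
next
  fix x y assume "x \<in> frac R" "y \<in> frac R"
  then obtain p q p' q' where x: "x = p / q" "p \<in> R" "q \<in> R" "q \<noteq> 0"
    and y: "y = p' / q'" "p' \<in> R" "q' \<in> R" "q' \<noteq> 0" unfolding frac_def by blast
  have "x + y = (p * q' + p' * q) / (q * q')" using x y by (simp add: field_simps)
  then show "x + y \<in> frac R" unfolding frac_def using x y R
    by (intro CollectI exI[of _ "p * q' + p' * q"] exI[of _ "q * q'"]) (auto intro!: sr_add sr_mult)
  have "x * y = (p * p') / (q * q')" using x y by simp
  then show "x * y \<in> frac R" unfolding frac_def using x y R
    by (intro CollectI exI[of _ "p * p'"] exI[of _ "q * q'"]) (auto intro!: sr_mult)
next
  fix x assume "x \<in> frac R"
  then obtain p q where x: "x = p / q" "p \<in> R" "q \<in> R" "q \<noteq> 0" unfolding frac_def by blast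
  have "- x = (- p) / q" using x by simp
  then show "- x \<in> frac R" unfolding frac_def using x R
    by (intro CollectI exI[of _ "- p"] exI[of _ q]) (auto intro!: sr_uminus)
  show "inverse x \<in> frac R"
  proof (cases "p = 0")
    case True then show ?thesis using x R unfolding frac_def by (intro CollectI exI[of _ 0] exI[of _ 1]) simp
  next
    case False
    have "inverse x = q / p" using x by simp
    then show ?thesis unfolding frac_def using x False by blast
  qed
qed

lemma frac_sup: "subring R \<Longrightarrow> R \<subseteq> frac R"
  unfolding frac_def by (force intro: exI[of _ 1])

lemma field_gen_frac:
  assumes R: "subring R" and "S \<subseteq> R" "R \<subseteq> field_gen S"
  shows "field_gen S = frac R"
proof
  show "field_gen S \<subseteq> frac R"
    using assms frac_subfield frac_sup field_gen_least by (metis order_trans)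
  show "frac R \<subseteq> field_gen S"
    using assms(3) sf_divide[OF field_gen_subfield] unfolding frac_def by blast
qed

lemma common_denom:
  fixes N :: nat
  assumes R: "subring R" and "\<forall>j<N. f j \<in> frac R"
  shows "\<exists>q\<in>R. q \<noteq> 0 \<and> (\<forall>j<N. q * f j \<in> R)"
  using assms(2)
proof (induction N)
  case 0 then show ?case using R by (auto intro!: bexI[of _ 1])
next
  case (Suc N)
  then obtain q where q: "q \<in> R" "q \<noteq> 0" "\<forall>j<N. q * f j \<in> R" by auto
  from Suc.prems obtain p' q' where pq: "f N = p' / q'" "p' \<in> R" "q' \<in> R" "q' \<noteq> 0"
    unfolding frac_def by blast
  have "\<forall>j<Suc N. (q * q') * f j \<in> R"
  proof (intro allI impI)
    fix j assume "j < Suc N"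
    show "(q * q') * f j \<in> R"
    proof (cases "j = N")
      case True
      then have "(q * q') * f j = q * p'" using pq by simp
      then show ?thesis using sr_mult[OF R q(1) pq(2)] by (simp only:)
    next
      case False
      then have "(q * q') * f j = q' * (q * f j)" by simp
      moreover have "q * f j \<in> R" using q \<open>j < Suc N\<close> False by simp
      ultimately show ?thesis using sr_mult[OF R pq(3)] by metis
    qed
  qed
  then show ?case using q pq R by (auto intro!: bexI[of _ "q * q'"])
qed

locale dk = deriv +
  fixes k :: "'a set"
  assumes k_dsub: "is_diff_subfield D k"
    and k_const: "constants_of D k = constants_of D UNIV"
begin

lemma k_sub: "is_subfield k" using k_dsub unfolding is_diff_subfield_def by blast
lemma k_sr: "subring k" using subfield_subring k_sub by blast
lemma k_D: "x \<in> k \<Longrightarrow> D x \<in> k" using k_dsub unfolding is_diff_subfield_def by blast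
lemma const_k: "D c = 0 \<Longrightarrow> c \<in> k"
  using k_const unfolding constants_of_def by blast

lemma of_nat_k[simp, intro]: "of_nat n \<in> k" using sr_of_nat[OF k_sr] .

lemma prim_alg_in:
  assumes E: "is_subfield E" and ED: "\<forall>x\<in>E. D x \<in> E" and kE: "k \<subseteq> E"
    and hD: "D h \<in> E" and ntr: "\<not> trans_over E h"
  shows "h \<in> E"
proof -
  have R: "subring E" using E subfield_subring by blast
  let ?S = "{d. \<exists>P. pin E P \<and> P \<noteq> 0 \<and> poly P h = 0 \<and> degree P = d}"
  from ntr have "?S \<noteq> {}" unfolding trans_over_def by blast
  define d where "d = (LEAST d. d \<in> ?S)"
  have "d \<in> ?S" unfolding d_def using \<open>?S \<noteq> {}\<close> by (meson LeastI ex_in_conv)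
  then obtain P where P: "pin E P" "P \<noteq> 0" "poly P h = 0" "degree P = d" by blast
  have dmin: "\<And>Q. pin E Q \<Longrightarrow> Q \<noteq> 0 \<Longrightarrow> poly Q h = 0 \<Longrightarrow> d \<le> degree Q"
    unfolding d_def by (rule Least_le) blast
  define c where "c = lead_coeff P"
  have c: "c \<noteq> 0" "c \<in> E" using P by (auto simp: c_def pin_def)
  define P1 where "P1 = smult (inverse c) P"
  have P1: "pin E P1" "P1 \<noteq> 0" "poly P1 h = 0" "degree P1 = d" "lead_coeff P1 = 1"
    using P c E R by (auto simp: P1_def c_def lead_coeff_smult intro!: pin_smult sf_inverse)
  have "d \<noteq> 0"
  proof
    assume "d = 0"
    then have "P1 = [:1:]" using P1 by (metis degree_0_id)
    then show False using P1 by simp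
  qed
  define Q where "Q = Dl h P1"
  have Q: "pin E Q" "poly Q h = 0"
    using pin_Dl[OF R ED hD P1(1)] P1 D_poly[of P1 h] by (auto simp: Q_def)
  have "coeff Q d = 0" using coeff_Dl_top[of h P1] P1 by (simp add: Q_def)
  have "Q = 0"
  proof (rule ccontr)
    assume "Q \<noteq> 0"
    have "degree Q \<le> d" using degree_Dl[of h P1] P1 by (simp add: Q_def)
    then have "degree Q < d" using \<open>coeff Q d = 0\<close> \<open>Q \<noteq> 0\<close>
      by (metis le_neq_implies_less leading_coeff_0_iff)
    then show False using dmin[OF Q(1) \<open>Q \<noteq> 0\<close> Q(2)] by simp
  qed
  then have "coeff Q (d - 1) = 0" by simp
  then have "D (coeff P1 (d - 1)) + of_nat d * D h = 0"
    using \<open>d \<noteq> 0\<close> P1 by (simp add: Q_def coeff_Dl)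
  then have "D (coeff P1 (d - 1) + of_nat d * h) = 0"
    by (simp add: D_add D_mult)
  then have "coeff P1 (d - 1) + of_nat d * h \<in> E" using const_k kE by blast
  moreover have "coeff P1 (d - 1) \<in> E" using P1 by (simp add: pin_def)
  ultimately have "(coeff P1 (d - 1) + of_nat d * h - coeff P1 (d - 1)) / of_nat d \<in> E"
    using E kE by (intro sf_divide sr_diff[OF R]) auto
  then show "h \<in> E" using \<open>d \<noteq> 0\<close> by simp
qed

end

section \<open>Towers\<close>

locale tower = dk +
  fixes u :: "nat \<Rightarrow> 'a"
begin

primrec A :: "nat \<Rightarrow> 'a set" where
  "A 0 = k"
| "A (Suc m) = {poly P (u m) | P. pin (A m) P}"

definition E :: "nat \<Rightarrow> 'a set" where
  "E m = field_gen (k \<union> u ` {..<m})"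

definition tower_ok :: "nat \<Rightarrow> bool" where
  "tower_ok m \<longleftrightarrow> (\<forall>j<m. D (u j) \<in> A j \<and> trans_over (E j) (u j))"

lemma tower_ok_mono: "tower_ok m \<Longrightarrow> j \<le> m \<Longrightarrow> tower_ok j"
  unfolding tower_ok_def by auto

lemma A_sr: "subring (A m)"
proof (induction m)
  case 0 then show ?case using k_sr by simp
next
  case (Suc m)
  note R = Suc.IH
  have mem: "poly P (u m) \<in> A (Suc m)" if "pin (A m) P" for P
    unfolding A.simps using that by blast
  show ?case unfolding subring_def
  proof (intro conjI ballI)
    show "0 \<in> A (Suc m)" using mem[of 0] R by simp
    show "1 \<in> A (Suc m)" using mem[of 1] R by simp
  next
    fix x y assume "x \<in> A (Suc m)" "y \<in> A (Suc m)"
    then obtain P Q where xy: "x = poly P (u m)" "pin (A m) P" "y = poly Q (u m)" "pin (A m) Q"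
      by auto
    show "x + y \<in> A (Suc m)" using mem[OF pin_add[OF R xy(2) xy(4)]] xy(1,3) by simp
    show "x * y \<in> A (Suc m)" using mem[OF pin_mult[OF R xy(2) xy(4)]] xy(1,3) by simp
  next
    fix x assume "x \<in> A (Suc m)"
    then obtain P where "x = poly P (u m)" "pin (A m) P" by auto
    then show "- x \<in> A (Suc m)" using mem[OF pin_uminus[OF R]] by simp
  qed
qed

lemma A_Suc_sup: "A m \<subseteq> A (Suc m)"
proof
  fix x assume "x \<in> A m"
  then have "pin (A m) [:x:]" using pin_const[OF A_sr] by simp
  then show "x \<in> A (Suc m)" unfolding A.simps by (intro CollectI exI[of _ "[:x:]"]) simp
qed

lemma A_mono: "j \<le> m \<Longrightarrow> A j \<subseteq> A m"
proof (induction m)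
  case (Suc m)
  then show ?case using A_Suc_sup[of m] by (metis le_SucE order_refl order_trans)
qed simp

lemma k_A: "k \<subseteq> A m" using A_mono[of 0 m] by simp

lemma u_A: "u m \<in> A (Suc m)"
proof -
  have "pin (A m) [:0, 1:]" using pin_pCons[OF A_sr] pin_0[OF A_sr] sr_0[OF A_sr] sr_1[OF A_sr] by simp
  then show ?thesis unfolding A.simps by (intro CollectI exI[of _ "[:0, 1:]"]) simp
qed

lemma gens_A: "k \<union> u ` {..<m} \<subseteq> A m"
proof -
  have "u j \<in> A m" if "j < m" for j
    using u_A[of j] A_mono[of "Suc j" m] that by auto
  then show ?thesis using k_A by auto
qed

lemma A_E: "A m \<subseteq> E m"
proof (induction m)
  case 0 then show ?case by (simp add: E_def field_gen_sup)
next
  case (Suc m)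
  have sub: "is_subfield (E (Suc m))" by (simp add: E_def field_gen_subfield)
  have EE: "E m \<subseteq> E (Suc m)" unfolding E_def by (rule field_gen_mono) auto
  have "u m \<in> k \<union> u ` {..<Suc m}" by (rule UnI2, rule imageI, simp)
  then have uE: "u m \<in> E (Suc m)" unfolding E_def by (rule subsetD[OF field_gen_sup])
  show ?case
  proof
    fix x assume "x \<in> A (Suc m)"
    then obtain P where P: "x = poly P (u m)" "pin (A m) P" by auto
    have "A m \<subseteq> E (Suc m)" using Suc.IH EE by blast
    then have "pin (E (Suc m)) P" using pin_mono[OF A_sr _ P(2)] by blast
    then show "x \<in> E (Suc m)" using pin_poly[OF sf_sr[OF sub] _ uE] P(1) by blast
  qed
qed

lemma E_frac: "E m = frac (A m)"
  unfolding E_def by (rule field_gen_frac[OF A_sr gens_A]) (use A_E in \<open>simp add: E_def\<close>)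

lemma E_sub: "is_subfield (E m)" by (simp add: E_def field_gen_subfield)
lemma E_sr: "subring (E m)" using E_sub subfield_subring by blast

lemma E_Suc: "E (Suc m) = field_gen (E m \<union> {u m})"
proof -
  have "field_gen (E m \<union> {u m}) = field_gen ((k \<union> u ` {..<m}) \<union> {u m})"
    unfolding E_def by (rule field_gen_field_gen_Un)
  moreover have "(k \<union> u ` {..<m}) \<union> {u m} = k \<union> u ` {..<Suc m}" by (auto simp: lessThan_Suc)
  ultimately show ?thesis unfolding E_def by simp
qed

lemma k_E: "k \<subseteq> E m" using k_A A_E by blast

lemma E_mono: "j \<le> m \<Longrightarrow> E j \<subseteq> E m"
  unfolding E_def by (rule field_gen_mono) auto

lemma A_D: "tower_ok m \<Longrightarrow> x \<in> A m \<Longrightarrow> D x \<in> A m"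
proof (induction m arbitrary: x)
  case 0 then show ?case using k_D by simp
next
  case (Suc m)
  have ok: "tower_ok m" using Suc.prems tower_ok_mono by simp
  from Suc.prems obtain P where P: "x = poly P (u m)" "pin (A m) P" by auto
  have "D (u m) \<in> A m" using Suc.prems unfolding tower_ok_def by simp
  then have "pin (A m) (Dl (u m) P)" using pin_Dl[OF A_sr] Suc.IH[OF ok] P by blast
  moreover have "D x = poly (Dl (u m) P) (u m)" using P(1) D_poly by simp
  ultimately show ?case unfolding A.simps by blast
qed

lemma E_D: "tower_ok m \<Longrightarrow> x \<in> E m \<Longrightarrow> D x \<in> E m"
proof -
  assume ok: "tower_ok m"
  have "\<forall>s\<in>k \<union> u ` {..<m}. D s \<in> E m"
  proof
    fix s assume "s \<in> k \<union> u ` {..<m}"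
    then have "s \<in> A m" using gens_A by blast
    then show "D s \<in> E m" using A_D[OF ok] A_E by blast
  qed
  then show "x \<in> E m \<Longrightarrow> D x \<in> E m" using diff_closure unfolding E_def by blast
qed

lemma lemma_G:
  assumes "tower_ok m" "I \<subseteq> A m" "\<exists>q\<in>I. q \<noteq> 0" "\<forall>q\<in>I. D q \<in> I" "\<forall>c\<in>k. \<forall>q\<in>I. c * q \<in> I"
  shows "\<exists>c\<in>I. c \<in> k \<and> c \<noteq> 0"
  using assms
proof (induction m arbitrary: I)
  case 0 then show ?case by auto
next
  case (Suc m)
  note ok = Suc.prems(1)
  have okm: "tower_ok m" using ok tower_ok_mono by simp
  have Du: "D (u m) \<in> A m" and tr: "trans_over (E m) (u m)" using ok unfolding tower_ok_def by auto
  have AmD: "\<forall>x\<in>A m. D x \<in> A m" using A_D[OF okm] by blast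
  let ?S = "{d. \<exists>P. pin (A m) P \<and> degree P \<le> d \<and> poly P (u m) \<in> I \<and> poly P (u m) \<noteq> 0}"
  obtain q where q: "q \<in> I" "q \<noteq> 0" using Suc.prems by blast
  then obtain P0 where "q = poly P0 (u m)" "pin (A m) P0" using Suc.prems(2) by auto
  then have "degree P0 \<in> ?S" using q by auto
  define d where "d = (LEAST d. d \<in> ?S)"
  have "d \<in> ?S" unfolding d_def using \<open>degree P0 \<in> ?S\<close> by (rule LeastI)
  have dmin: "\<And>d'. d' \<in> ?S \<Longrightarrow> d \<le> d'" unfolding d_def by (rule Least_le)
  define J where "J = {coeff P d | P. pin (A m) P \<and> degree P \<le> d \<and> poly P (u m) \<in> I}"
  have J_sub: "J \<subseteq> A m" unfolding J_def pin_def by auto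
  have J_nz: "\<exists>c\<in>J. c \<noteq> 0"
  proof -
    from \<open>d \<in> ?S\<close> obtain P where P: "pin (A m) P" "degree P \<le> d" "poly P (u m) \<in> I" "poly P (u m) \<noteq> 0"
      by blast
    have "coeff P d \<noteq> 0"
    proof
      assume c0: "coeff P d = 0"
      have "P \<noteq> 0" using P by auto
      then have "degree P < d" using P(2) c0 by (metis le_neq_implies_less leading_coeff_0_iff)
      then have "d - 1 \<in> ?S" using P by (auto intro!: exI[of _ P])
      then show False using dmin \<open>degree P < d\<close> by fastforce
    qed
    then show ?thesis unfolding J_def using P by blast
  qed
  have J_D: "\<forall>c\<in>J. D c \<in> J"
  proof
    fix c assume "c \<in> J"
    then obtain P where P: "c = coeff P d" "pin (A m) P" "degree P \<le> d" "poly P (u m) \<in> I"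
      unfolding J_def by blast
    have "D c = coeff (Dl (u m) P) d" using P by (simp add: coeff_Dl coeff_eq_0)
    moreover have "pin (A m) (Dl (u m) P)" using pin_Dl[OF A_sr AmD Du P(2)] .
    moreover have "degree (Dl (u m) P) \<le> d" using degree_Dl[of "u m" P] P by simp
    moreover have "poly (Dl (u m) P) (u m) \<in> I" using P Suc.prems(4) D_poly by metis
    ultimately show "D c \<in> J" unfolding J_def by blast
  qed
  have J_k: "\<forall>c\<in>k. \<forall>q\<in>J. c * q \<in> J"
  proof (intro ballI)
    fix c q assume "c \<in> k" "q \<in> J"
    then obtain P where P: "q = coeff P d" "pin (A m) P" "degree P \<le> d" "poly P (u m) \<in> I"
      unfolding J_def by blast
    have "c * q = coeff (smult c P) d" using P by simp
    moreover have "pin (A m) (smult c P)" using P \<open>c \<in> k\<close> k_A A_sr by blast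
    moreover have "degree (smult c P) \<le> d" using P by simp
    moreover have "poly (smult c P) (u m) \<in> I" using P Suc.prems(5) \<open>c \<in> k\<close> by simp
    ultimately show "c * q \<in> J" unfolding J_def by blast
  qed
  from Suc.IH[OF okm J_sub J_nz J_D J_k] obtain c where c: "c \<in> J" "c \<in> k" "c \<noteq> 0" by blast
  then obtain P where P: "c = coeff P d" "pin (A m) P" "degree P \<le> d" "poly P (u m) \<in> I"
    unfolding J_def by blast
  define P1 where "P1 = smult (inverse c) P"
  have ic: "inverse c \<in> k" using c sf_inverse[OF k_sub] by blast
  have P1: "coeff P1 d = 1" "pin (A m) P1" "degree P1 \<le> d" "poly P1 (u m) \<in> I"
    using P c Suc.prems(5) ic pin_smult[OF A_sr subsetD[OF k_A ic] P(2)]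
    by (auto simp: P1_def)
  have "P1 \<noteq> 0" using P1 by auto
  have "pin (E m) P1" using pin_mono[OF A_sr A_E P1(2)] .
  then have Q1nz: "poly P1 (u m) \<noteq> 0"
    using tr \<open>P1 \<noteq> 0\<close> trans_overD by metis
  show ?case
  proof (cases "d = 0")
    case True
    then have "P1 = [:1:]" using P1 by (metis degree_0_id le_zero_eq)
    then show ?thesis using P1 sr_1[OF k_sr] by (auto intro!: bexI[of _ 1])
  next
    case False
    let ?Q = "Dl (u m) P1"
    have "coeff ?Q d = 0" using P1 by (simp add: coeff_Dl coeff_eq_0)
    have "degree ?Q \<le> d - 1"
      using coeff_0_degree_minus_1[OF \<open>coeff ?Q d = 0\<close>] degree_Dl[of "u m" P1] P1 by simp
    have pinQ: "pin (A m) ?Q" using pin_Dl[OF A_sr AmD Du P1(2)] .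
    have DQ: "D (poly P1 (u m)) = poly ?Q (u m)" by (rule D_poly)
    have "D (poly P1 (u m)) = 0"
    proof (rule ccontr)
      assume "D (poly P1 (u m)) \<noteq> 0"
      moreover have "D (poly P1 (u m)) \<in> I" using Suc.prems(4) P1 by blast
      ultimately have "d - 1 \<in> ?S" using pinQ \<open>degree ?Q \<le> d - 1\<close> DQ by auto
      then show False using dmin False by fastforce
    qed
    then have "poly P1 (u m) \<in> k" by (rule const_k)
    then show ?thesis using Q1nz P1 by blast
  qed
qed

lemma ode_in_A:
  assumes ok: "tower_ok m" and y: "y \<in> E m" and a: "\<forall>j<N. a j \<in> k"
    and ode: "(D ^^ N) y + (\<Sum>j<N. a j * (D ^^ j) y) = 0"
  shows "y \<in> A m"
proof (cases "N = 0")
  case True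
  then have "y = 0" using ode by simp
  then show ?thesis using A_sr by simp
next
  case False
  have R: "subring (A m)" by (rule A_sr)
  have yE: "(D ^^ j) y \<in> E m" for j
    by (induction j) (use y E_D[OF ok] in auto)
  obtain q where q: "q \<in> A m" "q \<noteq> 0" "\<forall>j<N. q * (D ^^ j) y \<in> A m"
    using common_denom[OF R, of N "\<lambda>j. (D ^^ j) y"] yE E_frac by auto
  define I where "I = {Q \<in> A m. \<forall>j<N. Q * (D ^^ j) y \<in> A m}"
  have top: "Q * (D ^^ N) y \<in> A m" if "Q \<in> I" for Q
  proof -
    have "(D ^^ N) y = - (\<Sum>j<N. a j * (D ^^ j) y)"
      using ode by (simp add: eq_neg_iff_add_eq_0)
    then have "Q * (D ^^ N) y = - (\<Sum>j<N. a j * (Q * (D ^^ j) y))"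
      by (simp add: sum_distrib_left mult_ac)
    also have "\<dots> \<in> A m"
    proof -
      have "a j * (Q * (D ^^ j) y) \<in> A m" if "j < N" for j
        using sr_mult[OF R, of "a j" "Q * (D ^^ j) y"] a k_A \<open>Q \<in> I\<close> that unfolding I_def by blast
      then show ?thesis by (intro sr_uminus[OF R] sr_sum[OF R]) auto
    qed
    finally show ?thesis .
  qed
  have "\<forall>Q\<in>I. D Q \<in> I"
  proof
    fix Q assume Q: "Q \<in> I"
    have "D Q * (D ^^ j) y \<in> A m" if "j < N" for j
    proof -
      have "D Q * (D ^^ j) y = D (Q * (D ^^ j) y) - Q * (D ^^ Suc j) y"
        by (simp add: D_mult)
      moreover have "D (Q * (D ^^ j) y) \<in> A m" using A_D[OF ok] Q that unfolding I_def by blast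
      moreover have "Q * (D ^^ Suc j) y \<in> A m"
      proof (cases "Suc j = N")
        case True then show ?thesis using top Q by simp
      next
        case False
        then have "Suc j < N" using that by simp
        then show ?thesis using Q unfolding I_def by blast
      qed
      ultimately show ?thesis using R by auto
    qed
    then show "D Q \<in> I" using Q A_D[OF ok] unfolding I_def by blast
  qed
  moreover have "\<forall>c\<in>k. \<forall>Q\<in>I. c * Q \<in> I"
  proof (intro ballI)
    fix c Q assume cQ: "c \<in> k" "Q \<in> I"
    then have c: "c \<in> A m" using k_A by blast
    have "c * Q * (D ^^ j) y \<in> A m" if "j < N" for j
      using sr_mult[OF R c, of "Q * (D ^^ j) y"] cQ that unfolding I_def by (simp add: mult.assoc)
    then show "c * Q \<in> I" using sr_mult[OF R c, of Q] cQ unfolding I_def by blast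
  qed
  moreover have "I \<subseteq> A m" "\<exists>Q\<in>I. Q \<noteq> 0" using q unfolding I_def by auto
  ultimately obtain c where c: "c \<in> I" "c \<in> k" "c \<noteq> 0" using lemma_G[OF ok] by metis
  then have "c * y \<in> A m" using False unfolding I_def by auto
  then have "inverse c * (c * y) \<in> A m" using c k_A sf_inverse[OF k_sub] R by blast
  then show ?thesis using c by (simp add: mult.assoc[symmetric])
qed

end

context tower
begin

context
  fixes r :: nat and \<sigma> :: "'a \<Rightarrow> 'a"
  assumes ok: "tower_ok r" and aut: "diff_aut D k (E r) \<sigma>"
begin

abbreviation L where "L \<equiv> E r"

lemma s_L: "x \<in> L \<Longrightarrow> \<sigma> x \<in> L"
  using aut unfolding diff_aut_def bij_betw_def by blast
lemma s_add: "x \<in> L \<Longrightarrow> y \<in> L \<Longrightarrow> \<sigma> (x + y) = \<sigma> x + \<sigma> y"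
  using aut unfolding diff_aut_def by blast
lemma s_mult: "x \<in> L \<Longrightarrow> y \<in> L \<Longrightarrow> \<sigma> (x * y) = \<sigma> x * \<sigma> y"
  using aut unfolding diff_aut_def by blast
lemma s_D: "x \<in> L \<Longrightarrow> \<sigma> (D x) = D (\<sigma> x)"
  using aut unfolding diff_aut_def by blast
lemma s_k: "c \<in> k \<Longrightarrow> \<sigma> c = c"
  using aut unfolding diff_aut_def by blast
lemma s_diff: "x \<in> L \<Longrightarrow> y \<in> L \<Longrightarrow> \<sigma> (x - y) = \<sigma> x - \<sigma> y"
proof -
  assume xy: "x \<in> L" "y \<in> L"
  then have "x - y \<in> L" using sr_diff[OF E_sr] by blast
  then have "\<sigma> (x - y) + \<sigma> y = \<sigma> x" using s_add[OF _ xy(2)] by (metis diff_add_cancel)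
  then show ?thesis by (simp add: eq_diff_eq)
qed

definition dl :: "'a \<Rightarrow> 'a" where "dl z = \<sigma> z - z"

lemma dl_L: "x \<in> L \<Longrightarrow> (dl ^^ j) x \<in> L"
  by (induction j) (auto simp: dl_def intro!: sr_diff[OF E_sr] s_L)

lemma dl_0: "(dl ^^ j) 0 = 0"
  by (induction j) (auto simp: dl_def s_k sr_0[OF k_sr])

lemma dl_add: "x \<in> L \<Longrightarrow> y \<in> L \<Longrightarrow> (dl ^^ j) (x + y) = (dl ^^ j) x + (dl ^^ j) y"
proof (induction j)
  case (Suc j)
  have "(dl ^^ Suc j) (x + y) = dl ((dl ^^ j) x + (dl ^^ j) y)" using Suc by simp
  also have "\<dots> = dl ((dl ^^ j) x) + dl ((dl ^^ j) y)"
    using s_add[OF dl_L[OF Suc.prems(1)] dl_L[OF Suc.prems(2)]] by (simp add: dl_def)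
  finally show ?case by simp
qed simp

lemma dl_cmult: "c \<in> k \<Longrightarrow> x \<in> L \<Longrightarrow> (dl ^^ j) (c * x) = c * (dl ^^ j) x"
proof (induction j)
  case (Suc j)
  have cL: "c \<in> L" using Suc.prems k_E by blast
  have "(dl ^^ Suc j) (c * x) = dl (c * (dl ^^ j) x)" using Suc by simp
  also have "\<dots> = c * dl ((dl ^^ j) x)"
    using s_mult[OF cL dl_L[OF Suc.prems(2)]] s_k[OF Suc.prems(1)] by (simp add: dl_def algebra_simps)
  finally show ?case by simp
qed simp

lemma dl_D: "x \<in> L \<Longrightarrow> (dl ^^ j) (D x) = D ((dl ^^ j) x)"
proof (induction j)
  case (Suc j)
  have "(dl ^^ Suc j) (D x) = dl (D ((dl ^^ j) x))" using Suc by simp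
  also have "\<dots> = D (dl ((dl ^^ j) x))"
    using s_D[OF dl_L[OF Suc.prems]] by (simp add: dl_def D_diff)
  finally show ?case by simp
qed simp

lemma dl_s: "x \<in> L \<Longrightarrow> (dl ^^ j) (\<sigma> x) = \<sigma> ((dl ^^ j) x)"
proof (induction j)
  case (Suc j)
  have "(dl ^^ Suc j) (\<sigma> x) = dl (\<sigma> ((dl ^^ j) x))" using Suc by simp
  also have "\<dots> = \<sigma> (dl ((dl ^^ j) x))"
    using s_diff[OF s_L[OF dl_L[OF Suc.prems]] dl_L[OF Suc.prems]] by (simp add: dl_def)
  finally show ?case by simp
qed simp

lemma dl_mono: "(dl ^^ p) x = 0 \<Longrightarrow> p \<le> q \<Longrightarrow> (dl ^^ q) x = 0"
proof -
  assume "(dl ^^ p) x = 0" "p \<le> q"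
  then obtain t where "q = t + p" by (metis add.commute le_add_diff_inverse)
  then show ?thesis using \<open>(dl ^^ p) x = 0\<close> dl_0 by (simp add: funpow_add)
qed

lemma dl_prod_aux:
  "\<forall>a b p q. p + q = n \<longrightarrow> a \<in> L \<longrightarrow> b \<in> L \<longrightarrow> (dl ^^ p) a = 0 \<longrightarrow> (dl ^^ q) b = 0
     \<longrightarrow> (dl ^^ n) (a * b) = 0"
proof (induction n)
  case 0 then show ?case by simp
next
  case (Suc n)
  show ?case
  proof (intro allI impI)
    fix a b p q
    assume pq: "p + q = Suc n" and ab: "a \<in> L" "b \<in> L" and z: "(dl ^^ p) a = 0" "(dl ^^ q) b = 0"
    show "(dl ^^ Suc n) (a * b) = 0"
    proof (cases "p = 0 \<or> q = 0")
      case True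
      then have "a * b = 0" using z by auto
      then show ?thesis by (metis dl_0)
    next
      case False
      then obtain p' q' where p': "p = Suc p'" and q': "q = Suc q'" by (metis not0_implies_Suc)
      have R: "subring L" by (rule E_sr)
      have da: "dl a \<in> L" "\<sigma> b \<in> L" "dl b \<in> L" using dl_L[OF ab(1), of 1] dl_L[OF ab(2), of 1] s_L[OF ab(2)] by auto
      have eq: "dl (a * b) = dl a * \<sigma> b + a * dl b"
        using s_mult[OF ab] by (simp add: dl_def algebra_simps)
      have "(dl ^^ Suc n) (a * b) = (dl ^^ n) (dl (a * b))" by (simp add: funpow_Suc_right del: funpow.simps)
      also have "\<dots> = (dl ^^ n) (dl a * \<sigma> b) + (dl ^^ n) (a * dl b)"
        using eq dl_add sr_mult[OF R] da ab by metis
      also have "(dl ^^ n) (dl a * \<sigma> b) = 0"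
      proof -
        have "(dl ^^ p') (dl a) = 0" using z(1) p' by (simp add: funpow_Suc_right del: funpow.simps)
        moreover have "(dl ^^ q) (\<sigma> b) = 0" using dl_s[OF ab(2)] z(2) by (simp add: s_k sr_0[OF k_sr])
        ultimately show ?thesis using Suc.IH da pq p' by auto
      qed
      also have "(dl ^^ n) (a * dl b) = 0"
      proof -
        have "(dl ^^ q') (dl b) = 0" using z(2) q' by (simp add: funpow_Suc_right del: funpow.simps)
        then show ?thesis using Suc.IH da ab z(1) pq q' by auto
      qed
      finally show ?thesis by simp
    qed
  qed
qed

definition LN where "LN = {z \<in> L. \<exists>p. (dl ^^ p) z = 0}"

lemma LN_L: "z \<in> LN \<Longrightarrow> z \<in> L" by (simp add: LN_def)

lemma LN_add: "x \<in> LN \<Longrightarrow> y \<in> LN \<Longrightarrow> x + y \<in> LN"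
proof -
  assume "x \<in> LN" "y \<in> LN"
  then obtain p q where x: "x \<in> L" "(dl ^^ p) x = 0" and y: "y \<in> L" "(dl ^^ q) y = 0"
    unfolding LN_def by blast
  have "(dl ^^ (p + q)) (x + y) = 0"
    using dl_add[OF x(1) y(1)] dl_mono[OF x(2), of "p + q"] dl_mono[OF y(2), of "p + q"] by simp
  then show ?thesis unfolding LN_def using x y sr_add[OF E_sr] by blast
qed

lemma LN_mult: "x \<in> LN \<Longrightarrow> y \<in> LN \<Longrightarrow> x * y \<in> LN"
proof -
  assume "x \<in> LN" "y \<in> LN"
  then obtain p q where x: "x \<in> L" "(dl ^^ p) x = 0" and y: "y \<in> L" "(dl ^^ q) y = 0"
    unfolding LN_def by blast
  have "(dl ^^ (p + q)) (x * y) = 0" using dl_prod_aux[of "p + q"] x y by blast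
  then show ?thesis unfolding LN_def using x y sr_mult[OF E_sr] by blast
qed

lemma LN_k: "c \<in> k \<Longrightarrow> c \<in> LN"
proof -
  assume c: "c \<in> k"
  then have "(dl ^^ 1) c = 0" by (simp add: dl_def s_k)
  then show ?thesis unfolding LN_def using c k_E by blast
qed

lemma LN_sum: "finite S \<Longrightarrow> (\<And>i. i \<in> S \<Longrightarrow> f i \<in> LN) \<Longrightarrow> (\<Sum>i\<in>S. f i) \<in> LN"
  by (induction S rule: finite_induct) (auto intro: LN_add LN_k sr_0[OF k_sr])

lemma LN_power: "x \<in> LN \<Longrightarrow> x ^ n \<in> LN"
  by (induction n) (auto intro: LN_mult LN_k sr_1[OF k_sr])

lemma LN_prim:
  assumes "w \<in> L" "D w \<in> LN" shows "w \<in> LN"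
proof -
  obtain p where p: "(dl ^^ p) (D w) = 0" using assms unfolding LN_def by blast
  then have "D ((dl ^^ p) w) = 0" using dl_D[OF assms(1)] by simp
  then have c: "(dl ^^ p) w \<in> k" by (rule const_k)
  have "(dl ^^ Suc p) w = dl ((dl ^^ p) w)" by simp
  also have "\<dots> = 0" using c by (simp add: dl_def s_k)
  finally show ?thesis unfolding LN_def using assms by blast
qed

lemma A_LN: "m \<le> r \<Longrightarrow> A m \<subseteq> LN"
proof (induction m)
  case 0 then show ?case using LN_k by auto
next
  case (Suc m)
  have IH: "A m \<subseteq> LN" using Suc by simp
  have "D (u m) \<in> A m" using ok Suc.prems unfolding tower_ok_def by simp
  moreover have "u m \<in> L" using u_A A_mono[OF Suc.prems] A_E by blast
  ultimately have uLN: "u m \<in> LN" using LN_prim IH by blast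
  show ?case
  proof
    fix x assume "x \<in> A (Suc m)"
    then obtain P where P: "x = poly P (u m)" "pin (A m) P" by auto
    have "poly P (u m) = (\<Sum>i\<le>degree P. coeff P i * u m ^ i)" by (rule poly_altdef)
    also have "\<dots> \<in> LN"
      using P(2) IH uLN by (intro LN_sum) (auto simp: pin_def intro!: LN_mult LN_power)
    finally show "x \<in> LN" using P by simp
  qed
qed

end

end

lemma pderiv_sum': "pderiv (\<Sum>i\<in>S. f i) = (\<Sum>i\<in>S. pderiv (f i))"
  by (induction S rule: infinite_finite_induct) (auto simp: pderiv_add)

context dk
begin

lemma T: "tower D k" unfolding tower_def by (rule dk_axioms)

lemma A_agree: "(\<forall>j<m. u j = v j) \<Longrightarrow> tower.A k u m = tower.A k v m"
proof (induction m)
  case 0 then show ?case by (simp add: tower.A.simps[OF T])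
next
  case (Suc m)
  then have "tower.A k u m = tower.A k v m" by simp
  moreover have "u m = v m" using Suc.prems by simp
  ultimately show ?case by (simp add: tower.A.simps[OF T])
qed

lemma E_agree: "(\<forall>j<m. u j = v j) \<Longrightarrow> tower.E k u m = tower.E k v m"
  unfolding tower.E_def[OF T] by (metis (mono_tags, lifting) image_cong lessThan_iff)

lemma ok_agree: "(\<forall>j<m. u j = v j) \<Longrightarrow> tower.tower_ok D k u m = tower.tower_ok D k v m"
  unfolding tower.tower_ok_def[OF T] using A_agree E_agree
  by (metis (no_types, lifting) less_trans)

definition Cst :: "'a set" where "Cst = {c. D c = 0}"

lemma Cst_sr: "subring Cst"
  unfolding subring_def Cst_def by (auto simp: D_add D_mult D_uminus)

lemma Cst_k: "Cst \<subseteq> k" unfolding Cst_def using const_k by blast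

lemma Dl_const:
  assumes "pin Cst Q" "D w = 1" shows "Dl w Q = pderiv Q"
proof -
  have "map_poly D Q = 0"
    using assms(1) by (intro poly_eqI) (auto simp: coeff_map_poly pin_def Cst_def)
  then show ?thesis by (simp add: Dl_def assms(2))
qed

lemma antideriv:
  assumes "pin Cst L" "D w = 1"
  shows "\<exists>Q. pin Cst Q \<and> D (poly Q w) = poly L w"
proof -
  define Q where "Q = (\<Sum>i\<le>degree L. monom (coeff L i / of_nat (Suc i)) (Suc i))"
  have pQ: "pin Cst Q" unfolding Q_def using assms(1)
    by (intro pin_sum[OF Cst_sr] pin_monom[OF Cst_sr]) (auto simp: pin_def Cst_def D_divide simp del: of_nat_Suc)
  have "pderiv Q = (\<Sum>i\<le>degree L. monom (coeff L i) i)"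
    unfolding Q_def pderiv_sum' by (intro sum.cong) (auto simp: pderiv_monom simp del: of_nat_Suc)
  also have "\<dots> = L" by (rule poly_as_sum_of_monoms)
  finally have "pderiv Q = L" .
  then have "D (poly Q w) = poly L w" using D_poly[of Q w] Dl_const[OF pQ assms(2)] by simp
  then show ?thesis using pQ by blast
qed

end

locale iint = dk +
  fixes f xx :: 'a
  assumes xx_k: "xx \<in> k" and xx_D: "D xx = 1"
    and ii: "iterated_integral D k f"
begin

definition F :: "nat \<Rightarrow> 'a" where "F j = (D ^^ j) f"
definition n :: nat where "n = (LEAST n. F n \<in> k)"

lemma F_0: "F 0 = f" by (simp add: F_def)
lemma F_Suc: "D (F j) = F (Suc j)" by (simp add: F_def)
lemma F_n: "F n \<in> k"
proof -
  obtain m where "(D ^^ m) f \<in> k" using ii unfolding iterated_integral_def by blast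
  then have "F m \<in> k" by (simp add: F_def)
  then show ?thesis unfolding n_def by (rule LeastI)
qed
lemma F_less: "j < n \<Longrightarrow> F j \<notin> k"
  unfolding n_def using not_less_Least by blast
lemma F_iter: "(D ^^ i) (F j) = F (i + j)" by (simp add: F_def funpow_add)

context
  assumes fk: "f \<notin> k"
begin

lemma n_pos: "0 < n"
proof (rule ccontr)
  assume "\<not> 0 < n"
  then have "n = 0" by simp
  then show False using F_n fk F_0 by simp
qed

lemma Fn_nz: "F n \<noteq> 0"
proof
  assume "F n = 0"
  obtain n' where n': "n = Suc n'" using n_pos gr0_implies_Suc by blast
  then have "D (F (n - 1)) = 0" using F_Suc[of n'] \<open>F n = 0\<close> by simp
  then have "F (n - 1) \<in> k" by (rule const_k)
  then show False using F_less n_pos by simp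
qed

lemma F_ode:
  assumes "j \<le> n"
  shows "\<exists>N a. (\<forall>i<N. a i \<in> k) \<and> (D ^^ N) (F j) + (\<Sum>i<N. a i * (D ^^ i) (F j)) = 0"
proof -
  define N where "N = Suc (n - j)"
  define a where "a i = (if i = n - j then - D (F n) / F n else 0)" for i
  have ak: "- D (F n) / F n \<in> k"
    using F_n k_D sf_divide[OF k_sub] sr_uminus[OF k_sr] by blast
  have "a i \<in> k" for i unfolding a_def using ak sr_0[OF k_sr] by simp
  then have "\<forall>i<N. a i \<in> k" by blast
  moreover have "(D ^^ N) (F j) + (\<Sum>i<N. a i * (D ^^ i) (F j)) = 0"
  proof -
    have "(\<Sum>i<N. a i * (D ^^ i) (F j)) = a (n - j) * (D ^^ (n - j)) (F j)"
      unfolding N_def by (simp add: a_def)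
    also have "\<dots> = - D (F n)" using Fn_nz assms by (simp add: a_def F_iter)
    finally show ?thesis using assms by (simp add: N_def F_iter F_Suc)
  qed
  ultimately show ?thesis by blast
qed

definition INV :: "nat \<Rightarrow> bool" where
  "INV m \<longleftrightarrow> (\<exists>r u lam e. 1 \<le> r \<and> tower.tower_ok D k u r
      \<and> tower.E k u r = field_gen (k \<union> F ` {n - m..<n})
      \<and> F (n - m) = lam * u (r - 1) + e \<and> e \<in> tower.E k u (r - 1) \<and> lam \<noteq> 0
      \<and> (\<exists>Lm. pin Cst Lm \<and> lam = poly Lm xx))"

lemma field_gen_insert_in: "z \<in> field_gen S \<Longrightarrow> field_gen (insert z S) = field_gen S"
  by (metis field_gen_field_gen_Un field_gen_idem field_gen_subfield insert_absorb insert_is_Un sup_commute)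

lemma INV_1: "INV 1"
proof -
  define u where "u = (\<lambda>_::nat. F (n - 1))"
  have n1: "Suc (n - 1) = n" using n_pos by simp
  have E0: "tower.E k u 0 = k"
    unfolding tower.E_def[OF T] using field_gen_idem[OF k_sub] by simp
  have Du: "D (u 0) = F n" unfolding u_def using F_Suc[of "n - 1"] n1 by simp
  have A0: "tower.A k u 0 = k" by (simp add: tower.A.simps[OF T])
  have "F (n - 1) \<notin> k" using F_less n_pos by simp
  then have tr: "trans_over k (u 0)"
    using prim_alg_in[OF k_sub _ subset_refl, of "u 0"] k_D Du F_n unfolding u_def by auto
  have ok: "tower.tower_ok D k u 1"
    unfolding tower.tower_ok_def[OF T] using Du F_n A0 E0 tr by simp
  have "{n - 1..<n} = {n - 1}" using n_pos by auto
  then have "u ` {..<1} = F ` {n - 1..<n}" by (auto simp: u_def)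
  then have E1: "tower.E k u 1 = field_gen (k \<union> F ` {n - 1..<n})"
    unfolding tower.E_def[OF T] by simp
  have "F (n - 1) = 1 * u (1 - 1) + 0" by (simp add: u_def)
  moreover have "0 \<in> tower.E k u (1 - 1)" using E0 sr_0[OF k_sr] by simp
  moreover have "pin Cst [:1:] \<and> (1::'a) = poly [:1:] xx" using Cst_sr by (simp add: Cst_def)
  ultimately show ?thesis unfolding INV_def using ok E1
    by (rule_tac exI[of _ 1], rule_tac exI[of _ u], rule_tac exI[of _ 1], rule_tac exI[of _ 0]) fastforce
qed

lemma INV_step:
  assumes inv: "INV m" and m1: "1 \<le> m" and mn: "m < n"
  shows "INV (Suc m)"
proof -
  obtain r u lam e Lm where r1: "1 \<le> r" and ok: "tower.tower_ok D k u r"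
    and Er: "tower.E k u r = field_gen (k \<union> F ` {n - m..<n})"
    and Fnm: "F (n - m) = lam * u (r - 1) + e" and eE: "e \<in> tower.E k u (r - 1)" and lam0: "lam \<noteq> 0"
    and Lm: "pin Cst Lm" "lam = poly Lm xx"
    using inv unfolding INV_def by blast
  define j where "j = n - Suc m"
  have j: "Suc j = n - m" "j < n" "n - Suc m = j" using mn m1 by (auto simp: j_def)
  have jset: "{j..<n} = insert j {n - m..<n}" using j by auto
  have DFj: "D (F j) = F (n - m)" using F_Suc[of j] j by simp
  have "n - m \<in> {n - m..<n}" using mn m1 by auto
  then have FnmE: "F (n - m) \<in> tower.E k u r"
    using Er field_gen_sup[of "k \<union> F ` {n - m..<n}"] by blast
  have EDr: "\<forall>x\<in>tower.E k u r. D x \<in> tower.E k u r" using tower.E_D[OF T ok] by blast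
  have kEr: "k \<subseteq> tower.E k u r" using tower.k_E[OF T] .
  show ?thesis
  proof (cases "F j \<in> tower.E k u r")
    case False
    define u' where "u' = u(r := F j)"
    have agree: "\<forall>i<r. u i = u' i" unfolding u'_def by simp
    have u'r: "u' r = F j" unfolding u'_def by simp
    have agreeS: "\<forall>i<Suc r. u' i = (if i = r then F j else u i)" unfolding u'_def by simp
    have tr: "trans_over (tower.E k u r) (F j)"
    proof (rule ccontr)
      assume "\<not> trans_over (tower.E k u r) (F j)"
      then have "F j \<in> tower.E k u r" using prim_alg_in[OF tower.E_sub[OF T] EDr kEr] DFj FnmE by simp
      then show False using False by simp
    qed
    have Fnm_A: "F (n - m) \<in> tower.A k u r"
    proof -
      obtain N a where "\<forall>i<N. a i \<in> k" "(D ^^ N) (F (n - m)) + (\<Sum>i<N. a i * (D ^^ i) (F (n - m))) = 0"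
        using F_ode[of "n - m"] by auto
      then show ?thesis using tower.ode_in_A[OF T ok FnmE] by blast
    qed
    have ok': "tower.tower_ok D k u' (Suc r)"
    proof -
      have "tower.tower_ok D k u' r" using ok ok_agree[OF agree] by simp
      moreover have "u' r = F j" unfolding u'_def by simp
      moreover have "D (F j) \<in> tower.A k u' r" using Fnm_A DFj A_agree[OF agree] by simp
      moreover have "trans_over (tower.E k u' r) (F j)" using tr E_agree[OF agree] by simp
      ultimately show ?thesis unfolding tower.tower_ok_def[OF T] by (auto simp: less_Suc_eq)
    qed
    have E': "tower.E k u' (Suc r) = field_gen (k \<union> F ` {n - Suc m..<n})"
    proof -
      have "tower.E k u' (Suc r) = field_gen (tower.E k u' r \<union> {u' r})" by (rule tower.E_Suc[OF T])
      also have "\<dots> = field_gen (tower.E k u r \<union> {F j})" using E_agree[OF agree] u'r by simp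
      also have "\<dots> = field_gen ((k \<union> F ` {n - m..<n}) \<union> {F j})" using Er field_gen_field_gen_Un by metis
      also have "(k \<union> F ` {n - m..<n}) \<union> {F j} = k \<union> F ` {n - Suc m..<n}" using jset j by auto
      finally show ?thesis .
    qed
    have "F (n - Suc m) = 1 * u' (Suc r - 1) + 0" using j u'r by simp
    moreover have "0 \<in> tower.E k u' (Suc r - 1)" using sr_0[OF tower.E_sr[OF T]] by blast
    moreover have "pin Cst [:1:] \<and> (1::'a) = poly [:1:] xx" using Cst_sr by (simp add: Cst_def)
    ultimately show ?thesis unfolding INV_def using ok' E'
      by (rule_tac exI[of _ "Suc r"], rule_tac exI[of _ u'], rule_tac exI[of _ 1], rule_tac exI[of _ 0]) fastforce
  next
    case True
    have E': "tower.E k u r = field_gen (k \<union> F ` {n - Suc m..<n})"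
    proof -
      have "k \<union> F ` {n - Suc m..<n} = insert (F j) (k \<union> F ` {n - m..<n})" using jset j by auto
      then show ?thesis using field_gen_insert_in[of "F j" "k \<union> F ` {n - m..<n}"] True Er by simp
    qed
    obtain r0 where r0: "r = Suc r0" using r1 by (metis Suc_pred' less_eq_Suc_le One_nat_def)
    have okr0: "tower.tower_ok D k u r0" using tower.tower_ok_mono[OF T ok] r0 by simp
    have Dw: "D (u r0) \<in> tower.A k u r0" and trw: "trans_over (tower.E k u r0) (u r0)"
      using ok r0 unfolding tower.tower_ok_def[OF T] by auto
    have FjA: "F j \<in> tower.A k u r"
    proof -
      obtain N a where "\<forall>i<N. a i \<in> k" "(D ^^ N) (F j) + (\<Sum>i<N. a i * (D ^^ i) (F j)) = 0"
        using F_ode[of j] j by auto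
      then show ?thesis using tower.ode_in_A[OF T ok True] by blast
    qed
    then obtain P where P: "F j = poly P (u r0)" "pin (tower.A k u r0) P"
      using r0 by (auto simp: tower.A.simps[OF T])
    let ?w = "u r0" and ?N = "tower.E k u r0" and ?A = "tower.A k u r0"
    have RA: "subring ?A" by (rule tower.A_sr[OF T])
    have RN: "subring ?N" by (rule tower.E_sr[OF T])
    have AN: "?A \<subseteq> ?N" by (rule tower.A_E[OF T])
    have AD: "\<forall>x\<in>?A. D x \<in> ?A" using tower.A_D[OF T okr0] by blast
    have pinDl: "pin ?A (Dl ?w P)" by (rule pin_Dl[OF RA AD Dw P(2)])
    have lamk: "lam \<in> k"
      using Lm Cst_k pin_poly[OF k_sr] pin_mono[OF Cst_sr Cst_k] xx_k by metis
    have lamN: "lam \<in> ?N" using lamk tower.k_E[OF T] by blast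
    have eN: "e \<in> ?N" using eE r0 by simp
    have DlP: "Dl ?w P = [:e, lam:]"
    proof -
      have "poly (Dl ?w P - [:e, lam:]) ?w = 0"
        using D_poly[of P ?w] P(1) DFj Fnm r0 by (simp add: algebra_simps)
      moreover have "pin ?N (Dl ?w P - [:e, lam:])"
        using pin_mono[OF RA AN pinDl] lamN eN RN by (intro pin_diff[OF RN]) simp_all
      ultimately have "Dl ?w P - [:e, lam:] = 0" using trw trans_overD by blast
      then show ?thesis by simp
    qed
    have wN: "?w \<notin> ?N" using trans_over_not_in[OF trw RN] .
    define d where "d = degree P"
    have cDl: "coeff (Dl ?w P) i = D (coeff P i) + of_nat (Suc i) * coeff P (Suc i) * D ?w" for i
      by (rule coeff_Dl)
    have d1: "d = 1"
    proof (rule ccontr)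
      assume "d \<noteq> 1"
      show False
      proof (cases "d = 0")
        case True
        then have "coeff P 1 = 0" "coeff P 2 = 0" using coeff_eq_0[of P 1] coeff_eq_0[of P 2] d_def by auto
        then have "coeff (Dl ?w P) 1 = 0" using cDl[of 1] by (simp add: numeral_2_eq_2)
        then show False using DlP lam0 by simp
      next
        case False
        then have d2: "2 \<le> d" using \<open>d \<noteq> 1\<close> by simp
        obtain d' where d': "d = Suc d'" using False not0_implies_Suc by blast
        have "coeff (Dl ?w P) d = 0" using DlP d2 by (simp add: coeff_pCons')
        then have Dlead: "D (lead_coeff P) = 0" using coeff_Dl_top[of ?w P] d_def by simp
        define t where "t = coeff (Dl ?w P) d'"
        have t_eq: "t = D (coeff P d') + of_nat d * lead_coeff P * D ?w"
          unfolding t_def cDl using d' d_def by simp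
        have "\<exists>Tt\<in>k. D Tt = t"
        proof (cases "d' = 1")
          case True
          then have "t = lam" using DlP unfolding t_def by simp
          then obtain Q where "pin Cst Q" "D (poly Q xx) = t" using antideriv[OF Lm(1) xx_D] Lm(2) by auto
          moreover have "poly Q xx \<in> k"
            using \<open>pin Cst Q\<close> Cst_k pin_poly[OF k_sr] pin_mono[OF Cst_sr Cst_k] xx_k by metis
          ultimately show ?thesis by blast
        next
          case False
          then have "t = 0" using DlP d2 d' unfolding t_def by (simp add: coeff_pCons')
          then show ?thesis using sr_0[OF k_sr] by (intro bexI[of _ 0]) auto
        qed
        then obtain Tt where Tt: "Tt \<in> k" "D Tt = t" by blast
        define c where "c = coeff P d' + of_nat d * lead_coeff P * ?w - Tt"
        have "D c = 0" unfolding c_def using t_eq Tt Dlead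
          by (simp add: D_diff D_add D_mult algebra_simps)
        then have cN: "c \<in> ?N" using const_k tower.k_E[OF T] by blast
        have "P \<noteq> 0" using d' d_def by auto
        then have lead: "lead_coeff P \<in> ?N" "lead_coeff P \<noteq> 0"
          using P(2) AN by (auto simp: pin_def)
        have cP: "coeff P d' \<in> ?N" using P(2) AN by (auto simp: pin_def)
        have TN: "Tt \<in> ?N" using Tt tower.k_E[OF T] by blast
        have dnz: "(of_nat d :: 'a) \<noteq> 0" using d2 by simp
        have "?w = (c + Tt - coeff P d') / (of_nat d * lead_coeff P)"
          using dnz lead(2) unfolding c_def by (simp add: field_simps)
        moreover have "(c + Tt - coeff P d') / (of_nat d * lead_coeff P) \<in> ?N"
          using cN TN cP lead(1) tower.E_sub[OF T] RN
          by (intro sf_divide sr_diff[OF RN] sr_add[OF RN] sr_mult[OF RN] sr_of_nat[OF RN]) auto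
        ultimately show False using wN by simp
      qed
    qed
    have P2: "coeff P 2 = 0" using d1 d_def coeff_eq_0[of P 2] by simp
    have "D (coeff P 1) = lam" using cDl[of 1] DlP P2 by (simp add: numeral_2_eq_2)
    obtain Q where Q: "pin Cst Q" "D (poly Q xx) = lam" using antideriv[OF Lm(1) xx_D] Lm(2) by auto
    define c where "c = coeff P 1 - poly Q xx"
    have "D c = 0" unfolding c_def using Q \<open>D (coeff P 1) = lam\<close> by (simp add: D_diff)
    then have cC: "c \<in> Cst" by (simp add: Cst_def)
    have Qc1: "pin Cst (Q + [:c:])" using pin_add[OF Cst_sr Q(1)] pin_const[OF Cst_sr] cC by blast
    have Qc2: "coeff P 1 = poly (Q + [:c:]) xx" by (simp add: c_def)
    have p1nz: "coeff P 1 \<noteq> 0" using \<open>D (coeff P 1) = lam\<close> lam0 by auto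
    have Peq: "P = [:coeff P 0, coeff P 1:]"
    proof (rule poly_eqI)
      fix i show "coeff P i = coeff [:coeff P 0, coeff P 1:] i"
      proof (cases i)
        case (Suc i')
        show ?thesis
        proof (cases i')
          case (Suc i'')
          then have "coeff P i = 0" using coeff_eq_0[of P i] d1 d_def \<open>i = Suc i'\<close> by simp
          then show ?thesis using \<open>i = Suc i'\<close> Suc by simp
        qed (use Suc in simp)
      qed simp
    qed
    have "poly P ?w = coeff P 0 + ?w * coeff P 1" by (subst Peq) simp
    then have FF: "F (n - Suc m) = coeff P 1 * u (r - 1) + coeff P 0"
      using P(1) r0 j(3) by (simp add: algebra_simps)
    have p0E: "coeff P 0 \<in> tower.E k u (r - 1)" using P(2) AN r0 by (auto simp: pin_def)
    have ex: "\<exists>Lm. pin Cst Lm \<and> coeff P 1 = poly Lm xx" using Qc1 Qc2 by blast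
    show ?thesis unfolding INV_def
      apply (rule exI[of _ r], rule exI[of _ u], rule exI[of _ "coeff P 1"], rule exI[of _ "coeff P 0"])
      using r1 ok E' FF p0E p1nz ex by (intro conjI) assumption+
  qed
qed

lemma INV_all: "1 \<le> m \<Longrightarrow> m \<le> n \<Longrightarrow> INV m"
proof (induction m)
  case 0 then show ?case by simp
next
  case (Suc m)
  show ?case
  proof (cases "m = 0")
    case True then show ?thesis using INV_1 by simp
  next
    case False
    then show ?thesis using Suc INV_step[of m] by simp
  qed
qed

lemma INV_n: "INV n" using INV_all[of n] n_pos by simp

end
end

section \<open>Algebraic independence from a tower\<close>

lemma alg_indep_tower:
  fixes y :: "nat \<Rightarrow> 'a::field"
  assumes k: "is_subfield k"
    and tw: "\<forall>i<r. trans_over (field_gen (k \<union> y ` {..<i})) (y i)"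
  shows "alg_indep k r y"
  using tw unfolding alg_indep_def
proof (induction r)
  case 0
  show ?case
  proof (intro allI impI ballI)
    fix E c e
    assume H: "finite E \<and> (\<forall>e\<in>E. \<forall>i\<ge>0. e i = 0) \<and> (\<forall>e\<in>E. c e \<in> k) \<and>
        (\<Sum>e\<in>E. c e * (\<Prod>i<0. y i ^ e i)) = 0" and e: "e \<in> E"
    have "e' = (\<lambda>_. 0)" if "e' \<in> E" for e' using H that by (intro ext) simp
    then have "E \<subseteq> {\<lambda>_. 0}" by blast
    then have "E = {e}" using e by auto
    then show "c e = 0" using H by simp
  qed
next
  case (Suc r)
  have IH: "\<forall>E c. finite E \<and> (\<forall>e\<in>E. \<forall>i\<ge>r. e i = 0) \<and> (\<forall>e\<in>E. c e \<in> k) \<and>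
        (\<Sum>e\<in>E. c e * (\<Prod>i<r. y i ^ e i)) = 0 \<longrightarrow> (\<forall>e\<in>E. c e = 0)"
    using Suc by simp
  let ?G = "field_gen (k \<union> y ` {..<r})"
  have tr: "trans_over ?G (y r)" using Suc.prems by simp
  have G: "is_subfield ?G" by (rule field_gen_subfield)
  have RG: "subring ?G" using G subfield_subring by blast
  have kG: "k \<subseteq> ?G" using field_gen_sup[of "k \<union> y ` {..<r}"] by blast
  have yG: "y i \<in> ?G" if "i < r" for i
  proof -
    have "y i \<in> k \<union> y ` {..<r}" using that by simp
    then show ?thesis by (rule subsetD[OF field_gen_sup])
  qed
  show ?case
  proof (intro allI impI ballI)
    fix E c e0
    assume H: "finite E \<and> (\<forall>e\<in>E. \<forall>i\<ge>Suc r. e i = 0) \<and> (\<forall>e\<in>E. c e \<in> k) \<and>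
        (\<Sum>e\<in>E. c e * (\<Prod>i<Suc r. y i ^ e i)) = 0" and e0: "e0 \<in> E"
    have fE: "finite E" using H by blast
    define Ds where "Ds = (\<lambda>e. e r) ` E"
    have fD: "finite Ds" using fE by (simp add: Ds_def)
    define b where "b d = (\<Sum>e\<in>{e \<in> E. e r = d}. c e * (\<Prod>i<r. y i ^ e i))" for d
    have bG: "b d \<in> ?G" for d
      unfolding b_def using H kG yG
      by (intro sr_sum[OF RG] sr_mult[OF RG] sr_prod[OF RG] sr_power[OF RG]) auto
    have "(\<Sum>e\<in>E. c e * (\<Prod>i<Suc r. y i ^ e i)) = (\<Sum>e\<in>E. c e * (\<Prod>i<r. y i ^ e i) * y r ^ e r)"
      by (simp add: mult.assoc)
    also have "\<dots> = (\<Sum>d\<in>Ds. \<Sum>e\<in>{e \<in> E. e r = d}. c e * (\<Prod>i<r. y i ^ e i) * y r ^ e r)"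
      by (rule sum.group[symmetric, OF fE fD]) (simp add: Ds_def)
    also have "\<dots> = (\<Sum>d\<in>Ds. b d * y r ^ d)"
      unfolding b_def sum_distrib_right by (intro sum.cong refl) auto
    finally have sum0: "(\<Sum>d\<in>Ds. b d * y r ^ d) = 0" using H by simp
    define P where "P = (\<Sum>d\<in>Ds. monom (b d) d)"
    have "poly P (y r) = 0" unfolding P_def using sum0 by (simp add: poly_sum poly_monom mult.commute)
    moreover have "pin ?G P" unfolding P_def using bG by (intro pin_sum[OF RG] pin_monom[OF RG]) auto
    ultimately have "P = 0" using tr trans_overD by blast
    have bz: "b d = 0" if "d \<in> Ds" for d
    proof -
      have "coeff P d = (\<Sum>d'\<in>Ds. if d' = d then b d' else 0)"
        unfolding P_def coeff_sum by (intro sum.cong) auto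
      also have "\<dots> = b d" using that fD by simp
      finally show ?thesis using \<open>P = 0\<close> by simp
    qed
    define d0 where "d0 = e0 r"
    let ?Ed = "{e \<in> E. e r = d0}"
    let ?h = "\<lambda>e::nat\<Rightarrow>nat. e(r := 0)"
    have inj: "inj_on ?h ?Ed"
    proof (rule inj_onI)
      fix a a' assume A: "a \<in> ?Ed" "a' \<in> ?Ed" "a(r := 0) = a'(r := 0)"
      show "a = a'"
      proof (rule ext)
        fix i show "a i = a' i"
        proof (cases "i = r")
          case True then show ?thesis using A by simp
        next
          case False then show ?thesis using fun_cong[OF A(3), of i] by simp
        qed
      qed
    qed
    define c' where "c' = c \<circ> inv_into ?Ed ?h"
    have c'h: "c' (?h e) = c e" if "e \<in> ?Ed" for e
      unfolding c'_def using inv_into_f_f[OF inj that] by simp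
    have "finite (?h ` ?Ed)" using fE by simp
    moreover have "\<forall>e\<in>?h ` ?Ed. \<forall>i\<ge>r. e i = 0"
    proof (intro ballI allI impI)
      fix e' i assume "e' \<in> ?h ` ?Ed" "r \<le> i"
      then obtain e where "e \<in> ?Ed" "e' = ?h e" by blast
      then show "e' i = 0" using H \<open>r \<le> i\<close> by (cases "i = r") auto
    qed
    moreover have "\<forall>e\<in>?h ` ?Ed. c' e \<in> k" using c'h H by auto
    moreover have "(\<Sum>e\<in>?h ` ?Ed. c' e * (\<Prod>i<r. y i ^ e i)) = 0"
    proof -
      have "(\<Sum>e\<in>?h ` ?Ed. c' e * (\<Prod>i<r. y i ^ e i)) = (\<Sum>e\<in>?Ed. c' (?h e) * (\<Prod>i<r. y i ^ (?h e) i))"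
        by (rule sum.reindex[OF inj, unfolded comp_def])
      also have "\<dots> = b d0" unfolding b_def using c'h by (intro sum.cong refl) auto
      also have "\<dots> = 0" using bz e0 by (simp add: Ds_def d0_def)
      finally show ?thesis .
    qed
    ultimately have "\<forall>e\<in>?h ` ?Ed. c' e = 0" using IH by blast
    then show "c e0 = 0" using c'h[of e0] e0 by (simp add: d0_def)
  qed
qed

lemma unique_max_nonzero:
  fixes g :: "nat \<Rightarrow> 'a::field poly"
  assumes fS: "finite S" and i0: "i0 \<in> S" "g i0 \<noteq> 0"
    and oth: "\<forall>i\<in>S. i \<noteq> i0 \<longrightarrow> g i = 0 \<or> degree (g i) < degree (g i0)"
  shows "(\<Sum>i\<in>S. g i) \<noteq> 0"
proof -
  let ?d = "degree (g i0)"
  have "coeff (\<Sum>i\<in>S. g i) ?d = (\<Sum>i\<in>S. coeff (g i) ?d)" by (rule coeff_sum)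
  also have "\<dots> = coeff (g i0) ?d + (\<Sum>i\<in>S - {i0}. coeff (g i) ?d)"
    by (rule sum.remove[OF fS i0(1)])
  also have "(\<Sum>i\<in>S - {i0}. coeff (g i) ?d) = 0"
  proof (rule sum.neutral, rule ballI)
    fix i assume "i \<in> S - {i0}"
    then have "g i = 0 \<or> degree (g i) < ?d" using oth by blast
    then show "coeff (g i) ?d = 0" using coeff_eq_0 by auto
  qed
  finally have "coeff (\<Sum>i\<in>S. g i) ?d \<noteq> 0" using i0(2) by simp
  then show ?thesis by auto
qed

lemma degree_term:
  fixes P Q :: "'a::field poly"
  assumes "P \<noteq> 0" "Q \<noteq> 0" "c \<noteq> 0"
  shows "degree (smult c (P ^ i * Q ^ j)) = i * degree P + j * degree Q"
  using assms by (simp add: degree_mult_eq degree_power_eq)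

lemma deg_eq_of_rel:
  fixes P Q p :: "'a::field poly"
  assumes P: "P \<noteq> 0" and Q: "Q \<noteq> 0" and p: "p \<noteq> 0"
    and rel: "(\<Sum>i\<le>degree p. smult (coeff p i) (P ^ i * Q ^ (degree p - i))) = 0"
  shows "degree P = degree Q"
proof (rule ccontr)
  assume ne: "degree P \<noteq> degree Q"
  define m where "m = degree p"
  define a where "a = degree P"
  define b where "b = degree Q"
  define g where "g i = smult (coeff p i) (P ^ i * Q ^ (m - i))" for i
  have gdeg: "coeff p i \<noteq> 0 \<Longrightarrow> degree (g i) = i * a + (m - i) * b" for i
    unfolding g_def a_def b_def using degree_term[OF P Q] by simp
  have gz: "coeff p i = 0 \<Longrightarrow> g i = 0" for i unfolding g_def by simp
  have gnz: "coeff p i \<noteq> 0 \<Longrightarrow> g i \<noteq> 0" for i unfolding g_def using P Q by simp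
  have sum0: "(\<Sum>i\<le>m. g i) = 0" using rel unfolding g_def m_def .
  show False
  proof (cases "b < a")
    case True
    have "(\<Sum>i\<le>m. g i) \<noteq> 0"
    proof (rule unique_max_nonzero)
      show "m \<in> {..m}" by simp
      show "g m \<noteq> 0" using gnz p by (simp add: m_def)
      show "\<forall>i\<in>{..m}. i \<noteq> m \<longrightarrow> g i = 0 \<or> degree (g i) < degree (g m)"
      proof (intro ballI impI)
        fix i assume "i \<in> {..m}" "i \<noteq> m"
        then have im: "i < m" by simp
        show "g i = 0 \<or> degree (g i) < degree (g m)"
        proof (cases "coeff p i = 0")
          case True then show ?thesis using gz by simp
        next
          case False
          have "(m - i) * b < (m - i) * a" using True im by simp
          moreover have "m * a = i * a + (m - i) * a" using im by (simp add: diff_mult_distrib)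
          ultimately have "i * a + (m - i) * b < m * a" by linarith
          then show ?thesis using gdeg[OF False] gdeg[of m] p by (simp add: m_def)
        qed
      qed
    qed simp
    then show False using sum0 by simp
  next
    case False
    then have ab: "a < b" using ne by (simp add: a_def b_def)
    define i0 where "i0 = (LEAST i. coeff p i \<noteq> 0)"
    have ex: "\<exists>i. coeff p i \<noteq> 0" using p by (metis leading_coeff_0_iff)
    have i0nz: "coeff p i0 \<noteq> 0" unfolding i0_def using ex by (rule LeastI_ex)
    have i0le: "i0 \<le> m" using i0nz le_degree m_def by blast
    have below: "i < i0 \<Longrightarrow> coeff p i = 0" for i unfolding i0_def using not_less_Least by blast
    have "(\<Sum>i\<le>m. g i) \<noteq> 0"
    proof (rule unique_max_nonzero)
      show "i0 \<in> {..m}" using i0le by simp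
      show "g i0 \<noteq> 0" using gnz i0nz by simp
      show "\<forall>i\<in>{..m}. i \<noteq> i0 \<longrightarrow> g i = 0 \<or> degree (g i) < degree (g i0)"
      proof (intro ballI impI)
        fix i assume i: "i \<in> {..m}" "i \<noteq> i0"
        show "g i = 0 \<or> degree (g i) < degree (g i0)"
        proof (cases "coeff p i = 0")
          case True then show ?thesis using gz by simp
        next
          case False
          then have "i0 < i" using below i(2) by (meson linorder_neqE_nat)
          have im: "i \<le> m" using i by simp
          have "(i - i0) * a < (i - i0) * b" using ab \<open>i0 < i\<close> by simp
          moreover have "i * a = i0 * a + (i - i0) * a" using \<open>i0 < i\<close> by (simp add: diff_mult_distrib)
          moreover have "(m - i0) * b = (m - i) * b + (i - i0) * b"
            using \<open>i0 < i\<close> im by (simp add: diff_mult_distrib)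
          ultimately have "i * a + (m - i) * b < i0 * a + (m - i0) * b" by linarith
          then show ?thesis using gdeg[OF False] gdeg[OF i0nz] by simp
        qed
      qed
    qed simp
    then show False using sum0 by simp
  qed
qed

section \<open>Adjoining one element\<close>

definition padj :: "'a::field set \<Rightarrow> 'a \<Rightarrow> 'a set" where
  "padj G w = {poly P w | P. pin G P}"

lemma padj_sr:
  assumes "subring G" shows "subring (padj G w)"
  unfolding subring_def padj_def
proof (intro conjI ballI)
  show "0 \<in> {poly P w |P. pin G P}" using pin_0[OF assms] by (intro CollectI exI[of _ 0]) simp
  show "1 \<in> {poly P w |P. pin G P}" using pin_1[OF assms] by (intro CollectI exI[of _ 1]) simp
next
  fix x y assume "x \<in> {poly P w |P. pin G P}" "y \<in> {poly P w |P. pin G P}"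
  then obtain P Q where xy: "x = poly P w" "pin G P" "y = poly Q w" "pin G Q" by blast
  show "x + y \<in> {poly P w |P. pin G P}"
    using xy pin_add[OF assms xy(2) xy(4)] by (intro CollectI exI[of _ "P + Q"]) simp
  show "x * y \<in> {poly P w |P. pin G P}"
    using xy pin_mult[OF assms xy(2) xy(4)] by (intro CollectI exI[of _ "P * Q"]) simp
next
  fix x assume "x \<in> {poly P w |P. pin G P}"
  then obtain P where xy: "x = poly P w" "pin G P" by blast
  show "- x \<in> {poly P w |P. pin G P}"
    using xy pin_uminus[OF assms xy(2)] by (intro CollectI exI[of _ "- P"]) simp
qed

lemma padj_field_gen:
  assumes G: "is_subfield G" shows "field_gen (G \<union> {w}) = frac (padj G w)"
proof (rule field_gen_frac)
  have R: "subring G" using G subfield_subring by blast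
  show "subring (padj G w)" using padj_sr[OF R] .
  show "G \<union> {w} \<subseteq> padj G w"
  proof
    fix x assume "x \<in> G \<union> {w}"
    then show "x \<in> padj G w"
    proof
      assume "x \<in> G"
      then show ?thesis unfolding padj_def using pin_const[OF R] by (intro CollectI exI[of _ "[:x:]"]) simp
    next
      assume "x \<in> {w}"
      then show ?thesis unfolding padj_def using pin_pCons[OF R] pin_0[OF R] sr_0[OF R] sr_1[OF R]
        by (intro CollectI exI[of _ "[:0, 1:]"]) simp
    qed
  qed
  show "padj G w \<subseteq> field_gen (G \<union> {w})"
  proof
    fix x assume "x \<in> padj G w"
    then obtain P where P: "x = poly P w" "pin G P" unfolding padj_def by blast
    have F: "subring (field_gen (G \<union> {w}))" using field_gen_subfield subfield_subring by blast
    have "G \<subseteq> field_gen (G \<union> {w})" using field_gen_sup[of "G \<union> {w}"] by blast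
    then have "pin (field_gen (G \<union> {w})) P" using pin_mono[OF R _ P(2)] by blast
    moreover have "w \<in> field_gen (G \<union> {w})" using field_gen_sup[of "G \<union> {w}"] by blast
    ultimately show "x \<in> field_gen (G \<union> {w})" using pin_poly[OF F] P(1) by blast
  qed
qed

lemma algebraic_over_mono: "algebraic_over G z \<Longrightarrow> G \<subseteq> H \<Longrightarrow> algebraic_over H z"
  unfolding algebraic_over_def by blast

lemma frac_degree_eq:
  assumes G: "is_subfield G" and PQ: "pin G P" "pin G Q" "poly Q w \<noteq> 0" "P \<noteq> 0"
    and alg: "algebraic_over G (poly P w / poly Q w)" and tr: "trans_over G w"
  shows "degree P = degree Q"
proof -
  have R: "subring G" using G subfield_subring by blast
  obtain p where p: "p \<noteq> 0" "\<forall>i. coeff p i \<in> G" "poly p (poly P w / poly Q w) = 0"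
    using alg unfolding algebraic_over_def by blast
  define m where "m = degree p"
  define Rr where "Rr = (\<Sum>i\<le>m. smult (coeff p i) (P ^ i * Q ^ (m - i)))"
  let ?a = "poly P w" and ?q = "poly Q w"
  have "poly Rr w = (\<Sum>i\<le>m. coeff p i * (?a ^ i * ?q ^ (m - i)))"
    unfolding Rr_def by (simp add: poly_sum)
  also have "\<dots> = (\<Sum>i\<le>m. ?q ^ m * (coeff p i * (?a / ?q) ^ i))"
  proof (intro sum.cong refl)
    fix i assume "i \<in> {..m}"
    then have "?q ^ m = ?q ^ i * ?q ^ (m - i)" by (simp add: power_add[symmetric])
    then show "coeff p i * (?a ^ i * ?q ^ (m - i)) = ?q ^ m * (coeff p i * (?a / ?q) ^ i)"
      using PQ(3) by (simp add: power_divide field_simps)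
  qed
  also have "\<dots> = ?q ^ m * poly p (?a / ?q)"
    by (simp add: poly_altdef m_def sum_distrib_left)
  also have "\<dots> = 0" using p by simp
  finally have "poly Rr w = 0" .
  moreover have "pin G Rr" unfolding Rr_def using p(2) PQ
    by (intro pin_sum[OF R] pin_smult[OF R] pin_mult[OF R] pin_power[OF R]) (auto simp: pin_def)
  ultimately have "Rr = 0" using tr trans_overD by blast
  moreover have "Q \<noteq> 0" using PQ(3) by auto
  ultimately show ?thesis using deg_eq_of_rel[OF PQ(4) _ p(1)] unfolding Rr_def m_def by blast
qed

lemma single_var:
  assumes G: "is_subfield G" and tr: "trans_over G w" and z: "z \<in> field_gen (G \<union> {w})"
    and alg: "algebraic_over G z"
  shows "z \<in> G"
proof -
  have R: "subring G" using G subfield_subring by blast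
  obtain a b where ab: "z = a / b" "a \<in> padj G w" "b \<in> padj G w" "b \<noteq> 0"
    using z padj_field_gen[OF G] unfolding frac_def by blast
  obtain P Q where PQ: "a = poly P w" "pin G P" "b = poly Q w" "pin G Q"
    using ab unfolding padj_def by blast
  show ?thesis
  proof (cases "P = 0")
    case True then show ?thesis using ab PQ sr_0[OF R] by simp
  next
    case False
    have dPQ: "degree P = degree Q"
      using frac_degree_eq[OF G PQ(2) PQ(4) _ False _ tr] ab PQ alg by simp
    have Q0: "Q \<noteq> 0" using ab PQ by auto
    define c0 where "c0 = lead_coeff P / lead_coeff Q"
    have c0G: "c0 \<in> G" unfolding c0_def using PQ G by (intro sf_divide) (auto simp: pin_def)
    define P' where "P' = P - smult c0 Q"
    have pinP': "pin G P'" unfolding P'_def using PQ c0G by (intro pin_diff[OF R] pin_smult[OF R])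
    have zc: "z - c0 = poly P' w / poly Q w"
      using ab PQ by (simp add: P'_def field_simps)
    have "P' = 0"
    proof (rule ccontr)
      assume P'0: "P' \<noteq> 0"
      have "coeff P' (degree Q) = 0"
        using Q0 dPQ unfolding P'_def c0_def by simp
      moreover have "degree P' \<le> degree Q"
        unfolding P'_def using dPQ by (metis degree_diff_le degree_smult_le le_refl)
      ultimately have lt: "degree P' < degree Q" using P'0
        by (metis le_neq_implies_less leading_coeff_0_iff)
      have "algebraic_over G (z - c0)"
      proof -
        obtain p where p: "p \<noteq> 0" "\<forall>i. coeff p i \<in> G" "poly p z = 0"
          using alg unfolding algebraic_over_def by blast
        define p' where "p' = pcompose p [:c0, 1:]"
        have "poly p' (z - c0) = 0" using p by (simp add: p'_def poly_pcompose)
        moreover have "pin G p'"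
        proof -
          have "pin G p" using p(2) by (simp add: pin_def)
          moreover have "pin G [:c0, 1:]" using c0G sr_1[OF R] pin_pCons[OF R] pin_0[OF R] by simp
          ultimately show ?thesis unfolding p'_def by (rule pin_pcompose[OF R])
        qed
        moreover have "p' \<noteq> 0"
        proof
          assume "p' = 0"
          then have "degree p = 0" using degree_pcompose[of p "[:c0, 1:]"] by (simp add: p'_def)
          then obtain c where "p = [:c:]" by (metis degree_eq_zeroE)
          then show False using \<open>p' = 0\<close> p(1) by (simp add: p'_def)
        qed
        ultimately show ?thesis unfolding algebraic_over_def pin_def by blast
      qed
      then have "degree P' = degree Q"
        using frac_degree_eq[OF G pinP' PQ(4) _ P'0 _ tr] ab PQ zc by simp
      then show False using lt by simp
    qed
    then have "z = c0" using zc by simp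
    then show ?thesis using c0G by simp
  qed
qed


lemma poly_sum_le:
  fixes P :: "'a::field poly"
  assumes "degree P \<le> M" shows "poly P x = (\<Sum>j\<le>M. coeff P j * x ^ j)"
proof -
  have "poly P x = (\<Sum>j\<le>degree P. coeff P j * x ^ j)" by (rule poly_altdef)
  also have "\<dots> = (\<Sum>j\<le>M. coeff P j * x ^ j)"
    using assms by (intro sum.mono_neutral_left) (auto simp: coeff_eq_0)
  finally show ?thesis .
qed

lemma exchange:
  assumes G: "is_subfield G" and tru: "trans_over G u"
    and trf: "trans_over (field_gen (G \<union> {u})) f"
  shows "trans_over (field_gen (G \<union> {f})) u"
  unfolding trans_over_def
proof (intro allI impI)
  fix p assume pp: "pin (field_gen (G \<union> {f})) p" and pu: "poly p u = 0"
  have R: "subring G" using G subfield_subring by blast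
  have trfG: "trans_over G f"
    using trf trans_over_mono field_gen_sup[of "G \<union> {u}"] by blast
  show "p = 0"
  proof (rule ccontr)
    assume p0: "p \<noteq> 0"
    define m where "m = degree p"
    have "\<forall>j<Suc m. coeff p j \<in> frac (padj G f)"
      using pp padj_field_gen[OF G] unfolding pin_def by blast
    then obtain b where b: "b \<in> padj G f" "b \<noteq> 0" "\<forall>j<Suc m. b * coeff p j \<in> padj G f"
      using common_denom[OF padj_sr[OF R], of "Suc m" "coeff p"] by blast
    have "\<exists>C. pin G C \<and> poly C f = b * coeff p i" if "i \<le> m" for i
    proof -
      have "i < Suc m" using that by simp
      then have "b * coeff p i \<in> padj G f" using b(3) by blast
      then obtain P where "b * coeff p i = poly P f" "pin G P" unfolding padj_def by blast
      then show ?thesis by (intro exI[of _ P]) simp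
    qed
    then obtain C where C: "\<And>i. i \<le> m \<Longrightarrow> pin G (C i) \<and> poly (C i) f = b * coeff p i"
      by metis
    define M where "M = Max (degree ` C ` {..m})"
    have degC: "degree (C i) \<le> M" if "i \<le> m" for i
      unfolding M_def using that by (intro Max_ge) auto
    define t where "t j = (\<Sum>i\<le>m. coeff (C i) j * u ^ i)" for j
    have "0 = b * poly p u" using pu by simp
    also have "\<dots> = (\<Sum>i\<le>m. (b * coeff p i) * u ^ i)"
      by (simp add: poly_altdef m_def sum_distrib_left mult.assoc)
    also have "\<dots> = (\<Sum>i\<le>m. poly (C i) f * u ^ i)" using C by simp
    also have "\<dots> = (\<Sum>i\<le>m. \<Sum>j\<le>M. coeff (C i) j * f ^ j * u ^ i)"
      using poly_sum_le[OF degC] by (simp add: sum_distrib_right)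
    also have "\<dots> = (\<Sum>j\<le>M. \<Sum>i\<le>m. coeff (C i) j * f ^ j * u ^ i)" by (rule sum.swap)
    also have "\<dots> = (\<Sum>j\<le>M. t j * f ^ j)"
      unfolding t_def sum_distrib_right by (simp add: mult_ac)
    finally have tsum: "(\<Sum>j\<le>M. t j * f ^ j) = 0" by simp
    define T where "T = (\<Sum>j\<le>M. monom (t j) j)"
    let ?Gu = "field_gen (G \<union> {u})"
    have RGu: "subring ?Gu" using field_gen_subfield subfield_subring by blast
    have GGu: "G \<subseteq> ?Gu" using field_gen_sup[of "G \<union> {u}"] by blast
    have uGu: "u \<in> ?Gu" using field_gen_sup[of "G \<union> {u}"] by blast
    have tGu: "t j \<in> ?Gu" for j
    proof -
      have "coeff (C i) j \<in> ?Gu" if "i \<le> m" for i using C[OF that] GGu by (auto simp: pin_def)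
      then show ?thesis unfolding t_def
        by (intro sr_sum[OF RGu] sr_mult[OF RGu] sr_power[OF RGu] uGu) auto
    qed
    have "poly T f = 0" unfolding T_def using tsum by (simp add: poly_sum poly_monom mult.commute)
    moreover have "pin ?Gu T" unfolding T_def using tGu by (intro pin_sum[OF RGu] pin_monom[OF RGu])
    ultimately have "T = 0" using trf trans_overD by blast
    then have t0: "t j = 0" if "j \<le> M" for j
      using coeff_sum_monom[OF that, of t] unfolding T_def by simp
    have Cz: "coeff (C i) j = 0" if "i \<le> m" "j \<le> M" for i j
    proof -
      define S where "S = (\<Sum>i\<le>m. monom (coeff (C i) j) i)"
      have "poly S u = t j" unfolding S_def t_def by (simp add: poly_sum poly_monom mult.commute)
      then have "poly S u = 0" using t0[OF that(2)] by simp
      moreover have "pin G S" unfolding S_def using C by (intro pin_sum[OF R] pin_monom[OF R]) (auto simp: pin_def)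
      ultimately have "S = 0" using tru trans_overD by blast
      then show ?thesis using coeff_sum_monom[OF that(1), of "\<lambda>i. coeff (C i) j"] unfolding S_def by simp
    qed
    have "C m = 0"
    proof (rule poly_eqI)
      fix j show "coeff (C m) j = coeff 0 j"
      proof (cases "j \<le> M")
        case True then show ?thesis using Cz by simp
      next
        case False then show ?thesis using degC[of m] coeff_eq_0[of "C m" j] by simp
      qed
    qed
    then have "b * coeff p m = 0" using C[of m] by simp
    then have "lead_coeff p = 0" using b(2) by (simp add: m_def)
    then show False using p0 by simp
  qed
qed

lemma relalg_tower:
  fixes y :: "nat \<Rightarrow> 'a::field"
  assumes k: "is_subfield k" and r1: "1 \<le> r" and yf: "y (r - 1) = f"
    and tw: "\<forall>i<r. trans_over (field_gen (k \<union> y ` {..<i})) (y i)"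
  shows "rel_alg_closed_in (field_gen (k \<union> {f})) (field_gen (k \<union> y ` {..<r}))"
proof -
  define G where "G i = field_gen (k \<union> y ` {..<i})" for i
  define H where "H i = field_gen (k \<union> {f} \<union> y ` {..<i})" for i
  have G_Suc: "G (Suc i) = field_gen (G i \<union> {y i})" for i
  proof -
    have "field_gen (G i \<union> {y i}) = field_gen ((k \<union> y ` {..<i}) \<union> {y i})"
      unfolding G_def by (rule field_gen_field_gen_Un)
    moreover have "(k \<union> y ` {..<i}) \<union> {y i} = k \<union> y ` {..<Suc i}" by (auto simp: lessThan_Suc)
    ultimately show ?thesis unfolding G_def by simp
  qed
  have H_G: "H i = field_gen (G i \<union> {f})" for i
  proof -
    have "field_gen (G i \<union> {f}) = field_gen ((k \<union> y ` {..<i}) \<union> {f})"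
      unfolding G_def by (rule field_gen_field_gen_Un)
    moreover have "(k \<union> y ` {..<i}) \<union> {f} = k \<union> {f} \<union> y ` {..<i}" by auto
    ultimately show ?thesis unfolding H_def by simp
  qed
  have H_Suc: "H (Suc i) = field_gen (H i \<union> {y i})" for i
  proof -
    have "field_gen (H i \<union> {y i}) = field_gen ((k \<union> {f} \<union> y ` {..<i}) \<union> {y i})"
      unfolding H_def by (rule field_gen_field_gen_Un)
    moreover have "(k \<union> {f} \<union> y ` {..<i}) \<union> {y i} = k \<union> {f} \<union> y ` {..<Suc i}" by (auto simp: lessThan_Suc)
    ultimately show ?thesis unfolding H_def by simp
  qed
  have Gsub: "is_subfield (G i)" for i unfolding G_def by (rule field_gen_subfield)
  have Hsub: "is_subfield (H i)" for i unfolding H_def by (rule field_gen_subfield)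
  define S where "S j \<longleftrightarrow> trans_over (G j) f \<and> (\<forall>i. j \<le> i \<and> i < r - 1 \<longrightarrow> trans_over (H i) (y i))" for j
  have S_all: "S (r - 1 - t)" if "t \<le> r - 1" for t
    using that
  proof (induction t)
    case 0
    have "trans_over (G (r - 1)) (y (r - 1))" using tw r1 unfolding G_def by simp
    then show ?case unfolding S_def using yf by auto
  next
    case (Suc t)
    define j where "j = r - 1 - Suc t"
    have jS: "Suc j = r - 1 - t" using Suc.prems unfolding j_def by simp
    have Sj1: "S (Suc j)" using Suc jS by simp
    have tryj: "trans_over (G j) (y j)" using tw Suc.prems unfolding G_def j_def by simp
    have trf1: "trans_over (field_gen (G j \<union> {y j})) f" using Sj1 G_Suc unfolding S_def by simp
    have "trans_over (H j) (y j)" using exchange[OF Gsub tryj trf1] H_G by simp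
    moreover have "trans_over (G j) f"
    proof -
      have "G j \<subseteq> G (Suc j)" unfolding G_def by (rule field_gen_mono) (auto simp: lessThan_Suc)
      then show ?thesis using Sj1 trans_over_mono unfolding S_def by blast
    qed
    moreover have "\<forall>i. Suc j \<le> i \<and> i < r - 1 \<longrightarrow> trans_over (H i) (y i)" using Sj1 unfolding S_def by blast
    ultimately have "S j" unfolding S_def by (metis Suc_leI le_neq_implies_less)
    then show ?case by (simp add: j_def)
  qed
  have trH: "trans_over (H i) (y i)" if "i < r - 1" for i
    using S_all[of "r - 1"] that unfolding S_def by simp
  have Hr: "H (r - 1) = field_gen (k \<union> y ` {..<r})"
  proof -
    have "k \<union> {f} \<union> y ` {..<r - 1} = k \<union> y ` {..<r}"
    proof -
      have "{..<r} = insert (r - 1) {..<r - 1}" using r1 by auto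
      then show ?thesis using yf by auto
    qed
    then show ?thesis unfolding H_def by simp
  qed
  have H0: "H 0 = field_gen (k \<union> {f})" unfolding H_def by simp
  show ?thesis unfolding rel_alg_closed_in_def
  proof (intro ballI impI)
    fix z assume zL: "z \<in> field_gen (k \<union> y ` {..<r})" and alg: "algebraic_over (field_gen (k \<union> {f})) z"
    have H0i: "H 0 \<subseteq> H i" for i unfolding H_def by (rule field_gen_mono) auto
    have zH: "z \<in> H (r - 1 - t)" if "t \<le> r - 1" for t
      using that
    proof (induction t)
      case 0 then show ?case using zL Hr by simp
    next
      case (Suc t)
      define i where "i = r - 1 - Suc t"
      have iS: "Suc i = r - 1 - t" using Suc.prems unfolding i_def by simp
      have "z \<in> H (r - 1 - t)" using Suc.IH Suc.prems by simp
      then have "z \<in> H (Suc i)" using iS by simp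
      then have "z \<in> field_gen (H i \<union> {y i})" using H_Suc by simp
      moreover have "trans_over (H i) (y i)" using trH Suc.prems unfolding i_def by simp
      moreover have "algebraic_over (H i) z" using algebraic_over_mono[OF alg] H0 H0i by simp
      ultimately have "z \<in> H i" using single_var[OF Hsub] by blast
      then show ?case by (simp add: i_def)
    qed
    have "z \<in> H 0" using zH[of "r - 1"] by simp
    then show "z \<in> field_gen (k \<union> {f})" using H0 by simp
  qed
qed

lemma diff_field_gen_dsub: "is_diff_subfield D (diff_field_gen D S)"
  unfolding is_diff_subfield_def is_subfield_def diff_field_gen_def by auto

lemma diff_field_gen_sup: "S \<subseteq> diff_field_gen D S"
  unfolding diff_field_gen_def by auto

lemma diff_field_gen_least: "is_diff_subfield D F \<Longrightarrow> S \<subseteq> F \<Longrightarrow> diff_field_gen D S \<subseteq> F"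
  unfolding diff_field_gen_def by auto

lemma diff_field_gen_idem: "is_diff_subfield D F \<Longrightarrow> diff_field_gen D F = F"
  using diff_field_gen_least diff_field_gen_sup by blast

lemma trans_affine:
  assumes N: "is_subfield N" and tr: "trans_over N w" and lam: "lam \<in> N" "lam \<noteq> 0" and e: "e \<in> N"
  shows "trans_over N (lam * w + e)"
  unfolding trans_over_def
proof (intro allI impI)
  fix p assume p: "pin N p" "poly p (lam * w + e) = 0"
  have R: "subring N" using N subfield_subring by blast
  define q where "q = pcompose p [:e, lam:]"
  have "pin N [:e, lam:]" using lam e pin_pCons[OF R] pin_0[OF R] by simp
  then have "pin N q" unfolding q_def using pin_pcompose[OF R p(1)] by blast
  moreover have "poly q w = 0" unfolding q_def using p(2) by (simp add: poly_pcompose algebra_simps)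
  ultimately have "q = 0" using tr trans_overD by blast
  then have "degree p = 0" using degree_pcompose[of p "[:e, lam:]"] lam(2) by (simp add: q_def)
  then obtain c where "p = [:c:]" by (metis degree_eq_zeroE)
  then show "p = 0" using \<open>q = 0\<close> by (simp add: q_def)
qed

context iint
begin

lemma x_trans: "pin Cst P \<Longrightarrow> poly P xx = 0 \<Longrightarrow> P = 0"
proof (induction "degree P" arbitrary: P rule: less_induct)
  case less
  have DP: "D (poly P xx) = poly (pderiv P) xx"
    using D_poly[of P xx] Dl_const[OF less.prems(1) xx_D] by simp
  have pd: "pin Cst (pderiv P)" using pin_pderiv[OF Cst_sr less.prems(1)] .
  have "pderiv P = 0"
  proof (cases "degree P = 0")
    case True then show ?thesis by (simp add: pderiv_eq_0_iff)
  next
    case False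
    then have "degree (pderiv P) < degree P" by (simp add: degree_pderiv)
    moreover have "poly (pderiv P) xx = 0" using DP less.prems(2) by simp
    ultimately show ?thesis using less.hyps pd by blast
  qed
  then have "degree P = 0" by (simp add: pderiv_eq_0_iff)
  then obtain c where "P = [:c:]" by (metis degree_eq_zeroE)
  then show "P = 0" using less.prems(2) by simp
qed

lemma Dpow_x: "(D ^^ Suc i) (xx ^ i) = 0"
proof (induction i)
  case 0 then show ?case by simp
next
  case (Suc i)
  have "(D ^^ Suc (Suc i)) (xx ^ Suc i) = (D ^^ Suc i) (D (xx ^ Suc i))" by (rule funpow_D_Suc')
  also have "D (xx ^ Suc i) = of_nat (Suc i) * xx ^ i" using D_power[of xx i] xx_D by simp
  also have "(D ^^ Suc i) (of_nat (Suc i) * xx ^ i) = of_nat (Suc i) * (D ^^ Suc i) (xx ^ i)"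
    by (rule funpow_D_cmult[OF D_of_nat])
  finally show ?case using Suc by simp
qed

lemma Dpow_x_gt: "i < j \<Longrightarrow> (D ^^ j) (xx ^ i) = 0"
proof -
  assume "i < j"
  then obtain t where "j = Suc (i + t)" using less_imp_Suc_add by blast
  then have "j = t + Suc i" by simp
  then have "(D ^^ j) (xx ^ i) = (D ^^ t) ((D ^^ Suc i) (xx ^ i))" by (simp only: funpow_D_add_n)
  also have "\<dots> = 0" by (simp only: Dpow_x funpow_D_0)
  finally show ?thesis .
qed

lemma xpow_k: "xx ^ i \<in> k" using sr_power[OF k_sr xx_k] .

abbreviation Lf where "Lf \<equiv> diff_adjoin D k f"

lemma Lf_dsub: "is_diff_subfield D Lf" unfolding diff_adjoin_def by (rule diff_field_gen_dsub)
lemma k_Lf: "k \<subseteq> Lf" unfolding diff_adjoin_def using diff_field_gen_sup by blast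
lemma f_Lf: "f \<in> Lf" unfolding diff_adjoin_def using diff_field_gen_sup by blast

lemma Lf_const: "constants_of D Lf = constants_of D k"
  using k_Lf const_k unfolding constants_of_def by blast

lemma Lf_k: "f \<in> k \<Longrightarrow> Lf = k"
proof -
  assume "f \<in> k"
  then have "k \<union> {f} = k" by blast
  then show ?thesis unfolding diff_adjoin_def using diff_field_gen_idem[OF k_dsub] by simp
qed

lemma pv_part: "picard_vessiot D k Lf"
proof -
  have base: "is_diff_subfield D k \<and> is_diff_subfield D Lf \<and> k \<subseteq> Lf \<and> constants_of D Lf = constants_of D k"
    using k_dsub Lf_dsub k_Lf Lf_const by blast
  have "\<exists>N a y. pv_data D k Lf N a y"
  proof (cases "f \<in> k")
    case True
    have "Lf = diff_field_gen D (k \<union> (\<lambda>_. 0) ` {..<(0::nat)})"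
      using Lf_k[OF True] diff_field_gen_idem[OF k_dsub] by simp
    then have "pv_data D k Lf 0 (\<lambda>_. 0) (\<lambda>_. 0)" unfolding pv_data_def by simp
    then show ?thesis by blast
  next
    case False
    note fk = False
    define N where "N = Suc n"
    define y where "y i = (if i < n then xx ^ i else f)" for i
    define a where "a j = (if j = n then - D (F n) / F n else 0)" for j
    have ak: "\<forall>j<N. a j \<in> k"
    proof -
      have "- D (F n) / F n \<in> k" using F_n k_D sf_divide[OF k_sub] sr_uminus[OF k_sr] by blast
      then have "a j \<in> k" for j unfolding a_def using sr_0[OF k_sr] by simp
      then show ?thesis by blast
    qed
    have yL: "y i \<in> Lf" for i unfolding y_def using xpow_k k_Lf f_Lf by auto
    have sum_a: "(\<Sum>j<N. a j * (D ^^ j) z) = a n * (D ^^ n) z" for z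
      unfolding N_def by (simp add: a_def)
    have ode: "(D ^^ N) (y i) + (\<Sum>j<N. a j * (D ^^ j) (y i)) = 0" if "i < N" for i
    proof (cases "i < n")
      case True
      then have "(D ^^ N) (y i) = 0" "(D ^^ n) (y i) = 0"
        using Dpow_x_gt[of i N] Dpow_x_gt[of i n] by (auto simp: y_def N_def)
      then show ?thesis using sum_a by simp
    next
      case False
      then have yi: "y i = f" by (simp add: y_def)
      have "(D ^^ N) f = D (F n)" by (simp add: N_def F_def)
      moreover have "a n * (D ^^ n) f = - D (F n)" using Fn_nz[OF fk] by (simp add: a_def F_def)
      ultimately show ?thesis using sum_a yi by simp
    qed
    have indep: "\<forall>c. (\<forall>i<N. D (c i) = 0) \<and> (\<Sum>i<N. c i * y i) = 0 \<longrightarrow> (\<forall>i<N. c i = 0)"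
    proof (rule allI, rule impI)
      fix c assume H: "(\<forall>i<N. D (c i) = 0) \<and> (\<Sum>i<N. c i * y i) = 0"
      have ck: "c i \<in> k" if "i < N" for i using H that const_k by blast
      have s: "(\<Sum>i<N. c i * y i) = (\<Sum>i<n. c i * xx ^ i) + c n * f"
        unfolding N_def by (simp add: y_def)
      have skk: "(\<Sum>i<n. c i * xx ^ i) \<in> k"
        using ck xpow_k by (intro sr_sum[OF k_sr] sr_mult[OF k_sr]) (auto simp: N_def)
      have cn: "c n = 0"
      proof (rule ccontr)
        assume "c n \<noteq> 0"
        have "f = - (\<Sum>i<n. c i * xx ^ i) / c n"
          using H s \<open>c n \<noteq> 0\<close> by (simp add: field_simps eq_neg_iff_add_eq_0 add.commute)
        moreover have "- (\<Sum>i<n. c i * xx ^ i) / c n \<in> k"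
          using skk ck[of n] by (intro sf_divide[OF k_sub] sr_uminus[OF k_sr]) (auto simp: N_def)
        ultimately show False using fk by simp
      qed
      define P where "P = (\<Sum>i<n. monom (c i) i)"
      have "poly P xx = (\<Sum>i<n. c i * xx ^ i)" unfolding P_def by (simp add: poly_sum poly_monom)
      also have "\<dots> = 0" using H s cn by simp
      finally have "poly P xx = 0" .
      moreover have "pin Cst P" unfolding P_def using H
        by (intro pin_sum[OF Cst_sr] pin_monom[OF Cst_sr]) (auto simp: Cst_def N_def)
      ultimately have P0: "P = 0" using x_trans by blast
      have cP: "coeff P i = c i" if "i < n" for i
      proof -
        have "coeff P i = (\<Sum>j<n. if j = i then c j else 0)"
          unfolding P_def coeff_sum by (intro sum.cong) auto
        also have "\<dots> = c i" using that by simp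
        finally show ?thesis .
      qed
      show "\<forall>i<N. c i = 0"
      proof (intro allI impI)
        fix i assume "i < N"
        show "c i = 0"
        proof (cases "i < n")
          case True then show ?thesis using cP P0 by simp
        next
          case False
          then have "i = n" using \<open>i < N\<close> by (simp add: N_def)
          then show ?thesis using cn by simp
        qed
      qed
    qed
    have gens: "k \<union> y ` {..<N} = k \<union> {f}"
    proof
      show "k \<union> y ` {..<N} \<subseteq> k \<union> {f}" using xpow_k by (auto simp: y_def)
      have "y n = f" by (simp add: y_def)
      moreover have "n \<in> {..<N}" by (simp add: N_def)
      ultimately have "f \<in> y ` {..<N}" by (metis imageI)
      then show "k \<union> {f} \<subseteq> k \<union> y ` {..<N}" by blast
    qed
    have "pv_data D k Lf N a y"
      unfolding pv_data_def using ak yL ode indep gens by (simp add: diff_adjoin_def)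
    then show ?thesis by blast
  qed
  then show ?thesis unfolding picard_vessiot_def using base by blast
qed

lemma F_Lf: "F j \<in> Lf"
proof (induction j)
  case 0 then show ?case using f_Lf F_0 by simp
next
  case (Suc j)
  then have "D (F j) \<in> Lf" using Lf_dsub unfolding is_diff_subfield_def by blast
  then show ?case using F_Suc[of j] by simp
qed

lemma L_eq: "f \<notin> k \<Longrightarrow> Lf = field_gen (k \<union> F ` {0..<n})"
proof -
  assume fk: "f \<notin> k"
  define S where "S = k \<union> F ` {0..<n}"
  have DS: "\<forall>s\<in>S. D s \<in> field_gen S"
  proof
    fix s assume sS: "s \<in> S"
    have "D s \<in> S"
    proof (cases "s \<in> k")
      case True
      then have "D s \<in> k" by (rule k_D)
      then show ?thesis unfolding S_def by (rule UnI1)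
    next
      case False
      then have "s \<in> F ` {0..<n}" using sS unfolding S_def Un_iff by simp
      then obtain j where j0: "j \<in> {0..<n}" "s = F j" by (rule imageE)
      then have j: "j < n" by simp
      show ?thesis
      proof (cases "Suc j < n")
        case True
        then have "Suc j \<in> {0..<n}" by simp
        then have "F (Suc j) \<in> F ` {0..<n}" by (rule imageI)
        then show ?thesis using j0 F_Suc[of j] unfolding S_def by simp
      next
        case False
        then have "Suc j = n" using j by simp
        then show ?thesis using j0 F_Suc[of j] F_n unfolding S_def by simp
      qed
    qed
    then show "D s \<in> field_gen S" by (rule subsetD[OF field_gen_sup])
  qed
  have eq: "diff_field_gen D S = field_gen S" by (rule diff_field_gen_eq[OF DS])
  have "0 \<in> {0..<n}" using n_pos[OF fk] by simp
  then have "F 0 \<in> F ` {0..<n}" by (rule imageI)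
  then have "f \<in> F ` {0..<n}" using F_0 by simp
  then have "k \<union> {f} \<subseteq> S" unfolding S_def by blast
  moreover have "S \<subseteq> diff_field_gen D S" by (rule diff_field_gen_sup)
  ultimately have "k \<union> {f} \<subseteq> diff_field_gen D S" by (rule order_trans)
  then have sub1: "Lf \<subseteq> diff_field_gen D S"
    unfolding diff_adjoin_def by (rule diff_field_gen_least[OF diff_field_gen_dsub])
  have "F ` {0..<n} \<subseteq> Lf" using F_Lf by (intro image_subsetI)
  then have "S \<subseteq> Lf" unfolding S_def using k_Lf by (rule Un_least[rotated])
  then have sub2: "diff_field_gen D S \<subseteq> Lf" by (rule diff_field_gen_least[OF Lf_dsub])
  have "Lf = diff_field_gen D S" using sub1 sub2 by (rule subset_antisym)
  then show ?thesis using eq unfolding S_def by simp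
qed

lemma tower_exists: "\<exists>u r. tower.tower_ok D k u r \<and> tower.E k u r = Lf"
proof (cases "f \<in> k")
  case True
  have "tower.E k (\<lambda>_. 0) 0 = k"
    unfolding tower.E_def[OF T] using field_gen_idem[OF k_sub] by simp
  moreover have "tower.tower_ok D k (\<lambda>_. 0) 0" unfolding tower.tower_ok_def[OF T] by simp
  ultimately show ?thesis using Lf_k[OF True]
    by (intro exI[of _ "\<lambda>_. 0"] exI[of _ "0::nat"]) simp
next
  case False
  obtain r u lam e where "tower.tower_ok D k u r" "tower.E k u r = field_gen (k \<union> F ` {n - n..<n})"
    using INV_n[OF False] unfolding INV_def[OF False] by blast
  then show ?thesis using L_eq[OF False] by auto
qed

lemma unip: "unipotent_galois D k Lf"
  unfolding unipotent_galois_def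
proof (intro allI impI)
  fix n' a' y' \<sigma>
  assume H: "pv_data D k Lf n' a' y' \<and> diff_aut D k Lf \<sigma>"
  obtain u r where ok: "tower.tower_ok D k u r" and EL: "tower.E k u r = Lf"
    using tower_exists by blast
  have aut: "diff_aut D k (tower.E k u r) \<sigma>" using H EL by simp
  let ?dl = "tower.dl \<sigma>"
  have dl_eq: "(\<lambda>z. \<sigma> z - z) = ?dl" using tower.dl_def[OF T ok aut] by (intro ext) simp
  have "\<forall>i. \<exists>p. i < n' \<longrightarrow> (?dl ^^ p) (y' i) = 0"
  proof (intro allI)
    fix i show "\<exists>p. i < n' \<longrightarrow> (?dl ^^ p) (y' i) = 0"
    proof (cases "i < n'")
      case True
      have yL: "y' i \<in> tower.E k u r" using H True EL unfolding pv_data_def by blast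
      have "\<forall>j<n'. a' j \<in> k" "(D ^^ n') (y' i) + (\<Sum>j<n'. a' j * (D ^^ j) (y' i)) = 0"
        using H True unfolding pv_data_def by blast+
      then have "y' i \<in> tower.A k u r" using tower.ode_in_A[OF T ok yL] by blast
      then have "y' i \<in> tower.LN k u r \<sigma>" using tower.A_LN[OF T ok aut, of r] by blast
      then show ?thesis using tower.LN_def[OF T ok aut] by blast
    qed simp
  qed
  from choice[OF this] obtain P where P0: "\<forall>i. i < n' \<longrightarrow> (?dl ^^ P i) (y' i) = 0" by blast
  have P: "\<And>i. i < n' \<Longrightarrow> (?dl ^^ P i) (y' i) = 0" using P0 by blast
  define m where "m = (\<Sum>i<n'. P i)"
  show "\<exists>m. \<forall>c. (\<forall>i<n'. D (c i) = 0) \<longrightarrow> ((\<lambda>z. \<sigma> z - z) ^^ m) (\<Sum>i<n'. c i * y' i) = 0"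
  proof (intro exI[of _ m] allI impI)
    fix c assume c: "\<forall>i<n'. D (c i) = 0"
    have ck: "c i \<in> k" if "i < n'" for i using c that const_k by blast
    have yL: "y' i \<in> tower.E k u r" if "i < n'" for i using H that EL unfolding pv_data_def by blast
    have RE: "subring (tower.E k u r)" by (rule tower.E_sr[OF T])
    have kE: "k \<subseteq> tower.E k u r" by (rule tower.k_E[OF T])
    have sumlemma: "\<And>S. finite S \<Longrightarrow> S \<subseteq> {..<n'} \<Longrightarrow>
        (?dl ^^ m) (\<Sum>i\<in>S. c i * y' i) = (\<Sum>i\<in>S. (?dl ^^ m) (c i * y' i))"
    proof -
      fix S :: "nat set" assume "finite S" "S \<subseteq> {..<n'}"
      then show "(?dl ^^ m) (\<Sum>i\<in>S. c i * y' i) = (\<Sum>i\<in>S. (?dl ^^ m) (c i * y' i))"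
      proof (induction S rule: finite_induct)
        case empty then show ?case using tower.dl_0[OF T ok aut] by simp
      next
        case (insert i S)
        have i: "i < n'" using insert by auto
        have t1: "c i * y' i \<in> tower.E k u r" using ck[OF i] yL[OF i] kE by (intro sr_mult[OF RE]) auto
        have t2: "(\<Sum>j\<in>S. c j * y' j) \<in> tower.E k u r"
          using insert ck yL kE by (intro sr_sum[OF RE] sr_mult[OF RE]) auto
        show ?case using insert tower.dl_add[OF T ok aut t1 t2] by simp
      qed
    qed
    have "(?dl ^^ m) (\<Sum>i<n'. c i * y' i) = (\<Sum>i<n'. (?dl ^^ m) (c i * y' i))"
      using sumlemma[of "{..<n'}"] by simp
    also have "\<dots> = 0"
    proof (rule sum.neutral, rule ballI)
      fix i assume "i \<in> {..<n'}"
      then have i: "i < n'" by simp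
      have "P i \<le> m" unfolding m_def using i by (intro member_le_sum) auto
      then have "(?dl ^^ m) (y' i) = 0" using tower.dl_mono[OF T ok aut P[OF i]] by blast
      then show "(?dl ^^ m) (c i * y' i) = 0" using tower.dl_cmult[OF T ok aut ck[OF i] yL[OF i]] by simp
    qed
    finally show "((\<lambda>z. \<sigma> z - z) ^^ m) (\<Sum>i<n'. c i * y' i) = 0" using dl_eq by simp
  qed
qed

lemma part2:
  assumes fk: "f \<notin> k"
  shows "(\<exists>r y. r \<ge> 1 \<and> y (r - 1) = f \<and> (\<forall>i<r. y i \<in> Lf) \<and>
              alg_indep k r y \<and> Lf = field_gen (k \<union> y ` {..<r}))
           \<and> rel_alg_closed_in (field_gen (k \<union> {f})) Lf"
proof -
  obtain r u lam e Lm where r1: "1 \<le> r" and ok: "tower.tower_ok D k u r"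
    and Er: "tower.E k u r = field_gen (k \<union> F ` {n - n..<n})"
    and Fnm: "F (n - n) = lam * u (r - 1) + e" and eE: "e \<in> tower.E k u (r - 1)" and lam0: "lam \<noteq> 0"
    and Lm: "pin Cst Lm" "lam = poly Lm xx"
    using INV_n[OF fk] unfolding INV_def[OF fk] by blast
  have EL: "tower.E k u r = Lf" using Er L_eq[OF fk] by simp
  have ff: "f = lam * u (r - 1) + e" using Fnm F_0 by simp
  obtain r0 where r0: "r = Suc r0" using r1 by (cases r) auto
  define y where "y = u(r0 := f)"
  have yr: "y (r - 1) = f" using r0 by (simp add: y_def)
  let ?N = "tower.E k u r0" and ?w = "u r0"
  have Nsub: "is_subfield ?N" by (rule tower.E_sub[OF T])
  have RN: "subring ?N" using Nsub subfield_subring by blast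
  have lamN: "lam \<in> ?N"
    using Lm Cst_k pin_poly[OF k_sr] pin_mono[OF Cst_sr Cst_k] xx_k tower.k_E[OF T] by blast
  have eN: "e \<in> ?N" using eE r0 by simp
  have ff': "f = lam * ?w + e" using ff r0 by simp
  have yu: "y ` {..<i} = u ` {..<i}" if "i \<le> r0" for i using that by (auto simp: y_def)
  have Gi: "field_gen (k \<union> y ` {..<i}) = tower.E k u i" if "i \<le> r0" for i
    using yu[OF that] unfolding tower.E_def[OF T] by simp
  have tw: "\<forall>i<r. trans_over (field_gen (k \<union> y ` {..<i})) (y i)"
  proof (intro allI impI)
    fix i assume "i < r"
    show "trans_over (field_gen (k \<union> y ` {..<i})) (y i)"
    proof (cases "i = r0")
      case True
      have "trans_over ?N ?w" using ok r0 unfolding tower.tower_ok_def[OF T] by simp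
      then have "trans_over ?N f" using trans_affine[OF Nsub _ lamN lam0 eN] ff' by simp
      then show ?thesis using True Gi[of r0] by (simp add: y_def)
    next
      case False
      then have "i < r0" using \<open>i < r\<close> r0 by simp
      then have "trans_over (tower.E k u i) (u i)" using ok r0 unfolding tower.tower_ok_def[OF T] by simp
      then show ?thesis using Gi[of i] \<open>i < r0\<close> by (simp add: y_def)
    qed
  qed
  have ai: "alg_indep k r y" by (rule alg_indep_tower[OF k_sub tw])
  have gen: "field_gen (k \<union> y ` {..<r}) = Lf"
  proof -
    have "y ` {..<r} = u ` {..<r0} \<union> {f}" using r0 by (auto simp: y_def lessThan_Suc)
    then have "field_gen (k \<union> y ` {..<r}) = field_gen ((k \<union> u ` {..<r0}) \<union> {f})" by (simp add: Un_assoc)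
    also have "\<dots> = field_gen (?N \<union> {f})"
      unfolding tower.E_def[OF T] by (rule field_gen_field_gen_Un[symmetric])
    also have "\<dots> = field_gen (?N \<union> {?w})"
    proof (rule subset_antisym)
      have FG1: "is_subfield (field_gen (?N \<union> {?w}))" by (rule field_gen_subfield)
      have R1: "subring (field_gen (?N \<union> {?w}))" using FG1 subfield_subring by blast
      have sub1: "?N \<subseteq> field_gen (?N \<union> {?w})" "?w \<in> field_gen (?N \<union> {?w})"
        using field_gen_sup[of "?N \<union> {?w}"] by auto
      have le: "lam \<in> field_gen (?N \<union> {?w})" "e \<in> field_gen (?N \<union> {?w})"
        using sub1 lamN eN by auto
      have "lam * ?w + e \<in> field_gen (?N \<union> {?w})"
        using le sub1(2) by (intro sr_add[OF R1] sr_mult[OF R1])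
      then have "f \<in> field_gen (?N \<union> {?w})" using ff' by simp
      then show "field_gen (?N \<union> {f}) \<subseteq> field_gen (?N \<union> {?w})"
        using sub1 field_gen_sub_iff by blast
      have FG2: "is_subfield (field_gen (?N \<union> {f}))" by (rule field_gen_subfield)
      have R2: "subring (field_gen (?N \<union> {f}))" using FG2 subfield_subring by blast
      have sub2: "?N \<subseteq> field_gen (?N \<union> {f})" "f \<in> field_gen (?N \<union> {f})"
        using field_gen_sup[of "?N \<union> {f}"] by auto
      have "?w = (f - e) / lam" using ff' lam0 by (simp add: field_simps)
      moreover have "(f - e) / lam \<in> field_gen (?N \<union> {f})"
        using sub2 lamN eN by (intro sf_divide[OF FG2] sr_diff[OF R2]) auto
      ultimately have "?w \<in> field_gen (?N \<union> {f})" by simp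
      then show "field_gen (?N \<union> {?w}) \<subseteq> field_gen (?N \<union> {f})"
        using sub2 field_gen_sub_iff by blast
    qed
    also have "\<dots> = tower.E k u r" using tower.E_Suc[OF T, of u r0] r0 by simp
    finally show ?thesis using EL by simp
  qed
  have yL: "\<forall>i<r. y i \<in> Lf"
  proof (intro allI impI)
    fix i assume "i < r"
    then have "y i \<in> k \<union> y ` {..<r}" by simp
    then have "y i \<in> field_gen (k \<union> y ` {..<r})" by (rule subsetD[OF field_gen_sup])
    then show "y i \<in> Lf" using gen by simp
  qed
  have rc: "rel_alg_closed_in (field_gen (k \<union> {f})) Lf"
    using relalg_tower[OF k_sub r1 yr tw] gen by simp
  have "\<exists>r y. r \<ge> 1 \<and> y (r - 1) = f \<and> (\<forall>i<r. y i \<in> Lf) \<and>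
              alg_indep k r y \<and> Lf = field_gen (k \<union> y ` {..<r})"
    apply (rule exI[of _ r], rule exI[of _ y])
    using r1 yr yL ai gen by simp
  then show ?thesis using rc by blast
qed

end

theorem lemma31:
  fixes D :: "'a::field_char_0 \<Rightarrow> 'a" and k :: "'a set" and f :: 'a
  assumes "is_derivation D"
    and "is_diff_subfield D k"
    and "constants_of D k = constants_of D UNIV"
    and "alg_closed_subfield (constants_of D UNIV)"
    and "\<exists>x\<in>k. D x = 1"
    and "iterated_integral D k f"
  shows "picard_vessiot D k (diff_adjoin D k f) \<and> unipotent_galois D k (diff_adjoin D k f) \<and>
         (f \<notin> k \<longrightarrow>
           (\<exists>r y. r \<ge> 1 \<and> y (r - 1) = f \<and> (\<forall>i<r. y i \<in> diff_adjoin D k f) \<and>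
              alg_indep k r y \<and> diff_adjoin D k f = field_gen (k \<union> y ` {..<r}))
           \<and> rel_alg_closed_in (field_gen (k \<union> {f})) (diff_adjoin D k f))"
proof -
  obtain x where x: "x \<in> k" "D x = 1" using assms(5) by blast
  interpret I: iint D k f x
    by unfold_locales (use assms x in auto)
  show ?thesis using I.pv_part I.unip I.part2 by blast
qed

end
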